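(* In the resource theory of unital maps on a $d$-dimensional Hilbert space, with the currency $\mathcal C=\{C^k\}_{k=1}^d\cup\{\Omega\}$, $C^k=\{\Pi^k/k\}$, $\mathrm{Val}(C^k)=\log d-\log k$, $\mathrm{Val}(\Omega)=0$, the yield of any specification $V\in S^\Omega$ is $$\mathrm{Yield}(V)=\log d-\max_{\rho\in V^{\mathrm P}}H_0(\rho),$$ where $V^{\mathrm P}$ is the convex hull of $V$.
   Context: $\Omega$ is the set of all density operators on a Hilbert space $\mathcal H$ of dimension $d$ with fixed orthonormal basis $\{\ket i\}_{i=1}^d$; $S^\Omega$ is the set of non-empty subsets of $\Omega$; $\Pi^k=\sum_{i=1}^k\ket i\bra i$. Allowed transformations: $f_{\mathcal E}(V)=\{\mathcal E(\rho):\rho\in V\}$ for unital CPTP maps $\mathcal E$; $V\to W$ iff some unital CPTP $\mathcal E$ has $\mathcal E(\rho)\in W$ for all $\rho\in V$. $\mathrm{Yield}(V)=\sup\{\mathrm{Val}(C):C\in\mathcal C,\ V\to C\}$. $H_0(\rho)=\log\operatorname{rank}(\rho)$; logarithms are base 2. The convex hull $V^{\mathrm P}$ is the set of all finite convex combinations of elements of $V$. *)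

theory Defs
  imports "Jordan_Normal_Form.DL_Rank"
begin

(* Matrices are JNF complex matrices; the Hilbert space is C^d with the standard basis
   |i> = unit_vec d i (0-based indices 0..d-1). *)

definition mtrace :: "complex mat \<Rightarrow> complex" where
  "mtrace A = (\<Sum>i<dim_row A. A $$ (i, i))"

definition psd :: "nat \<Rightarrow> complex mat \<Rightarrow> bool" where
  "psd n A \<longleftrightarrow> A \<in> carrier_mat n n \<and>
     (\<forall>v \<in> carrier_vec n. Im (conjugate v \<bullet> (A *\<^sub>v v)) = 0 \<and> Re (conjugate v \<bullet> (A *\<^sub>v v)) \<ge> 0)"

definition density_ops :: "nat \<Rightarrow> complex mat set" where
  "density_ops d = {\<rho>. psd d \<rho> \<and> mtrace \<rho> = 1}"

definition linear_on :: "nat \<Rightarrow> (complex mat \<Rightarrow> complex mat) \<Rightarrow> bool" where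
  "linear_on d E \<longleftrightarrow>
     (\<forall>A \<in> carrier_mat d d. E A \<in> carrier_mat d d) \<and>
     (\<forall>A \<in> carrier_mat d d. \<forall>B \<in> carrier_mat d d. \<forall>a b :: complex.
        E (a \<cdot>\<^sub>m A + b \<cdot>\<^sub>m B) = a \<cdot>\<^sub>m E A + b \<cdot>\<^sub>m E B)"

(* (id_n \<otimes> E) applied to an (n*d) x (n*d) matrix, viewed as an n x n block matrix of
   d x d blocks; C^n \<otimes> C^d is indexed by (p, a) \<mapsto> p * d + a *)
definition id_tensor :: "nat \<Rightarrow> nat \<Rightarrow> (complex mat \<Rightarrow> complex mat) \<Rightarrow> complex mat \<Rightarrow> complex mat" where
  "id_tensor n d E M = mat (n * d) (n * d) (\<lambda>(i, j).
      E (mat d d (\<lambda>(a, b). M $$ ((i div d) * d + a, (j div d) * d + b))) $$ (i mod d, j mod d))"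

definition completely_positive :: "nat \<Rightarrow> (complex mat \<Rightarrow> complex mat) \<Rightarrow> bool" where
  "completely_positive d E \<longleftrightarrow>
     (\<forall>n. \<forall>M. psd (n * d) M \<longrightarrow> psd (n * d) (id_tensor n d E M))"

definition trace_preserving :: "nat \<Rightarrow> (complex mat \<Rightarrow> complex mat) \<Rightarrow> bool" where
  "trace_preserving d E \<longleftrightarrow> (\<forall>A \<in> carrier_mat d d. mtrace (E A) = mtrace A)"

definition unital_cptp :: "nat \<Rightarrow> (complex mat \<Rightarrow> complex mat) \<Rightarrow> bool" where
  "unital_cptp d E \<longleftrightarrow> linear_on d E \<and> completely_positive d E \<and> trace_preserving d E
     \<and> E (1\<^sub>m d) = 1\<^sub>m d"

definition specs :: "nat \<Rightarrow> complex mat set set" where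
  "specs d = {V. V \<noteq> {} \<and> V \<subseteq> density_ops d}"

definition convertible :: "nat \<Rightarrow> complex mat set \<Rightarrow> complex mat set \<Rightarrow> bool" where
  "convertible d V W \<longleftrightarrow> (\<exists>E. unital_cptp d E \<and> (\<forall>\<rho> \<in> V. E \<rho> \<in> W))"

(* Pi^k = sum_{i=1}^k |i><i|  (0-based: diagonal entries i < k equal 1) *)
definition Pi_proj :: "nat \<Rightarrow> nat \<Rightarrow> complex mat" where
  "Pi_proj d k = mat d d (\<lambda>(i, j). if i = j \<and> i < k then 1 else 0)"

(* currency: index Some k stands for C^k = {Pi^k / k} (1 \<le> k \<le> d), None stands for Omega *)
definition currency_index :: "nat \<Rightarrow> nat option set" where
  "currency_index d = {None} \<union> Some ` {1..d}"

definition currency_set :: "nat \<Rightarrow> nat option \<Rightarrow> complex mat set" where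
  "currency_set d c = (case c of None \<Rightarrow> density_ops d
                          | Some k \<Rightarrow> {(1 / of_nat k) \<cdot>\<^sub>m Pi_proj d k})"

definition currency_val :: "nat \<Rightarrow> nat option \<Rightarrow> real" where
  "currency_val d c = (case c of None \<Rightarrow> 0 | Some k \<Rightarrow> log 2 (real d) - log 2 (real k))"

definition yield :: "nat \<Rightarrow> complex mat set \<Rightarrow> real" where
  "yield d V = Sup {currency_val d c | c. c \<in> currency_index d \<and> convertible d V (currency_set d c)}"

definition H0 :: "nat \<Rightarrow> complex mat \<Rightarrow> real" where
  "H0 d \<rho> = log 2 (real (vec_space.rank d \<rho>))"

definition conv_hull_mat :: "nat \<Rightarrow> complex mat set \<Rightarrow> complex mat set" where
  "conv_hull_mat d V = {mat d d (\<lambda>(i, j). \<Sum>l<m. of_real (p l :: real) * (r l) $$ (i, j)) | m p r.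
      (m :: nat) > 0 \<and> (\<forall>l<m. p l \<ge> 0 \<and> r l \<in> V) \<and> (\<Sum>l<m. p l) = 1}"

end

theory Submission
  imports Defs "Jordan_Normal_Form.Gram_Schmidt"
begin

lemma F1_vs:
  fixes A :: "complex mat"
  assumes A: "A \<in> carrier_mat d d"
  shows "\<exists>us. length us = vec_space.rank d A \<and> set us \<subseteq> carrier_vec d \<and> corthogonal us
     \<and> set us \<subseteq> LinearCombinations.module.span class_ring (module_vec TYPE(complex) d) (set (cols A))
     \<and> set (cols A) \<subseteq> LinearCombinations.module.span class_ring (module_vec TYPE(complex) d) (set us)"
proof -
  interpret cof_vec_space d "TYPE(complex)" .
  have colsC: "set (cols A) \<subseteq> carrier_vec d" using A cols_dim by blast
  obtain S where S: "maximal S (\<lambda>T. T \<subseteq> set (cols A) \<and> lin_indpt T)"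
    using maximal_exists[of "(\<lambda>T. T \<subseteq> set (cols A) \<and> lin_indpt T)" "card (set (cols A))" "{}"]
    by (meson List.finite_set card_mono empty_iff empty_subsetI finite_lin_indpt2 rev_finite_subset)
  have rk: "rank A = card S" using rank_card_indpt[OF A S] .
  have SC: "S \<subseteq> set (cols A)" and Sli: "lin_indpt S" using S unfolding maximal_def by auto
  have finS: "finite S" using SC finite_subset by blast
  obtain ws where ws: "set ws = S" "distinct ws" using finite_distinct_list[OF finS] by blast
  have wsC: "set ws \<subseteq> carrier_vec d" using ws SC colsC by auto
  define us where "us = gram_schmidt d ws"
  note gs = gram_schmidt_result[OF wsC ws(2) _ us_def, unfolded ws(1), OF Sli]
  have "set (cols A) \<subseteq> span S"
  proof
    fix c assume c: "c \<in> set (cols A)"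
    show "c \<in> span S"
    proof (cases "c \<in> S")
      case True then show ?thesis using in_own_span SC colsC by blast
    next
      case False
      have "lin_dep (S \<union> {c})"
      proof (rule ccontr)
        assume "lin_indpt (S \<union> {c})"
        then have "S \<union> {c} = S" using S c SC unfolding maximal_def by blast
        then show False using False by blast
      qed
      then show ?thesis using lin_dep_iff_in_span[of S c] Sli SC colsC c False by auto
    qed
  qed
  moreover have "S \<subseteq> span (set (cols A))" using SC colsC in_own_span by blast
  then have "span S \<subseteq> span (set (cols A))" using span_subsetI colsC by blast
  moreover have "set us \<subseteq> span (set us)" using gs in_own_span by blast
  ultimately show ?thesis using gs rk ws
    by (intro exI[of _ us]) (auto simp: distinct_card)
qed


lemma span_conc:
  fixes vs :: "complex vec list"
  assumes vs: "set vs \<subseteq> carrier_vec d"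
    and v: "v \<in> LinearCombinations.module.span class_ring (module_vec TYPE(complex) d) (set vs)"
  shows "\<exists>c. \<forall>a<d. v $ a = (\<Sum>i<length vs. c i * vs ! i $ a)"
proof -
  interpret cof_vec_space d "TYPE(complex)" .
  have "v \<in> span_list vs" using v span_list_as_span[OF vs] by simp
  then obtain c where vc: "v = lincomb_list c vs" by (auto elim: in_span_listE)
  have "\<forall>w\<in>set vs. dim_vec w = d" using vs by auto
  then have "v = mat_of_cols d vs *\<^sub>v vec (length vs) c" using vc lincomb_list_as_mat_mult by simp
  then have "\<forall>a<d. v $ a = (\<Sum>i<length vs. c i * vs ! i $ a)"
    by (auto simp: mult_mat_vec_def scalar_prod_def row_def mat_of_cols_def lessThan_atLeast0 mult.commute intro!: sum.cong)
  then show ?thesis by blast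
qed


lemma cscalar_real:
  fixes v :: "complex vec"
  shows "Im (v \<bullet>c v) = 0 \<and> Re (v \<bullet>c v) \<ge> 0"
proof -
  have "v \<bullet>c v \<ge> 0" by (rule conjugate_square_ge_0_vec)
  then show ?thesis by (simp add: less_eq_complex_def)
qed

lemma F1:
  fixes A :: "complex mat"
  assumes A: "A \<in> carrier_mat d d"
  shows "\<exists>u w. (\<forall>i<vec_space.rank d A. \<forall>i'<vec_space.rank d A.
             (\<Sum>a<d. cnj (u i a) * u i' a) = (if i = i' then 1 else 0))
     \<and> (\<forall>i<vec_space.rank d A. \<forall>a<d. u i a = (\<Sum>b<d. A $$ (a,b) * w i b))
     \<and> (\<forall>b<d. \<exists>c. \<forall>a<d. A $$ (a,b) = (\<Sum>i<vec_space.rank d A. c i * u i a))"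
proof -
  let ?R = "vec_space.rank d A"
  obtain us where us: "length us = ?R" "set us \<subseteq> carrier_vec d" "corthogonal us"
     "set us \<subseteq> LinearCombinations.module.span class_ring (module_vec TYPE(complex) d) (set (cols A))"
     "set (cols A) \<subseteq> LinearCombinations.module.span class_ring (module_vec TYPE(complex) d) (set us)"
    using F1_vs[OF A] by blast
  have colsC: "set (cols A) \<subseteq> carrier_vec d" using A cols_dim by blast
  define nr where "nr i = sqrt (Re (us ! i \<bullet>c us ! i))" for i
  define u where "u i a = us ! i $ a / complex_of_real (nr i)" for i a
  have nrpos: "nr i > 0" if i: "i < ?R" for i
  proof -
    have "us ! i \<bullet>c us ! i \<noteq> 0" using corthogonalD[OF us(3), of i i] i us(1) by auto
    moreover have "Im (us ! i \<bullet>c us ! i) = 0" "Re (us ! i \<bullet>c us ! i) \<ge> 0" using cscalar_real by auto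
    ultimately have "Re (us ! i \<bullet>c us ! i) > 0" using complex_eq_iff by force
    then show ?thesis unfolding nr_def by simp
  qed
  have nrnz: "nr i \<noteq> 0" if "i < ?R" for i using nrpos[OF that] by simp
  have nrsq: "us ! i \<bullet>c us ! i = complex_of_real (nr i) * complex_of_real (nr i)" for i
  proof -
    have "Im (us ! i \<bullet>c us ! i) = 0" "Re (us ! i \<bullet>c us ! i) \<ge> 0" using cscalar_real by auto
    then show ?thesis unfolding nr_def
      by (simp add: complex_eq_iff)
  qed
  have dimus: "dim_vec (us ! i) = d" if "i < ?R" for i using us(1,2) that by (metis carrier_vecD nth_mem subsetD)
  have cs: "us ! i' \<bullet>c us ! i = (\<Sum>a<d. cnj (us ! i $ a) * us ! i' $ a)" if "i < ?R" "i' < ?R" for i i'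
    using dimus[OF that(1)] dimus[OF that(2)]
    by (simp add: scalar_prod_def lessThan_atLeast0 mult.commute)
  have orth: "(\<Sum>a<d. cnj (u i a) * u i' a) = (if i = i' then 1 else 0)" if "i < ?R" "i' < ?R" for i i'
  proof -
    have "(\<Sum>a<d. cnj (u i a) * u i' a) = (\<Sum>a<d. cnj (us ! i $ a) * us ! i' $ a) / (complex_of_real (nr i) * complex_of_real (nr i'))"
      unfolding u_def by (simp add: sum_divide_distrib)
    also have "\<dots> = (us ! i' \<bullet>c us ! i) / (complex_of_real (nr i) * complex_of_real (nr i'))"
      using cs[OF that] by simp
    finally show ?thesis
      using corthogonalD[OF us(3), of i' i] that us(1) nrsq[of i] nrpos[OF that(1)] by auto
  qed
  have inrange: "\<exists>w. \<forall>a<d. u i a = (\<Sum>b<d. A $$ (a,b) * w b)" if i: "i < ?R" for i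
  proof -
    have "us ! i \<in> set us" using i us(1) by simp
    then obtain c where c: "\<forall>a<d. us ! i $ a = (\<Sum>j<length (cols A). c j * cols A ! j $ a)"
      using span_conc[OF colsC, of "us ! i"] us(4) by blast
    have "\<forall>a<d. u i a = (\<Sum>b<d. A $$ (a,b) * (c b / complex_of_real (nr i)))"
      unfolding u_def using c A by (auto simp: sum_divide_distrib mult.commute intro!: sum.cong)
    then show ?thesis by (rule exI[where x="\<lambda>b. c b / complex_of_real (nr i)"])
  qed
  have "\<forall>i. \<exists>w. i < ?R \<longrightarrow> (\<forall>a<d. u i a = (\<Sum>b<d. A $$ (a,b) * w b))"
  proof
    fix i show "\<exists>w. i < ?R \<longrightarrow> (\<forall>a<d. u i a = (\<Sum>b<d. A $$ (a,b) * w b))"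
    proof (cases "i < ?R")
      case True
      then obtain w where "\<forall>a<d. u i a = (\<Sum>b<d. A $$ (a,b) * w b)" using inrange by presburger
      then show ?thesis by (intro exI[of _ w]) simp
    qed simp
  qed
  from choice[OF this] obtain w where w: "\<forall>i<?R. \<forall>a<d. u i a = (\<Sum>b<d. A $$ (a,b) * w i b)"
    by blast
  have incol: "\<exists>c. \<forall>a<d. A $$ (a,b) = (\<Sum>i<?R. c i * u i a)" if b: "b < d" for b
  proof -
    have "col A b \<in> set (cols A)" using A b by (simp add: cols_def)
    then obtain c where c: "\<forall>a<d. col A b $ a = (\<Sum>i<length us. c i * us ! i $ a)"
      using span_conc[OF us(2), of "col A b"] us(5) by blast
    have "\<forall>a<d. A $$ (a,b) = (\<Sum>i<?R. (c i * complex_of_real (nr i)) * u i a)"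
      using c A b us(1) unfolding u_def by (auto intro!: sum.cong simp: nrnz)
    then show ?thesis by (rule exI[where x="\<lambda>i. c i * complex_of_real (nr i)"])
  qed
  show ?thesis
    apply (rule exI[of _ u], rule exI[of _ w], intro conjI)
    subgoal using orth by blast
    subgoal using w by blast
    subgoal using incol by blast
    done
qed

definition bf :: "nat \<Rightarrow> complex mat \<Rightarrow> (nat \<Rightarrow> complex) \<Rightarrow> (nat \<Rightarrow> complex) \<Rightarrow> complex" where
  "bf d A f g = (\<Sum>i<d. \<Sum>j<d. cnj (f i) * A $$ (i,j) * g j)"

lemma cscalar_mult_eq_bf:
  assumes A: "A \<in> carrier_mat d d" and v: "v \<in> carrier_vec d"
  shows "conjugate v \<bullet> (A *\<^sub>v v) = bf d A (($) v) (($) v)"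
  using A v
  by (auto simp: bf_def scalar_prod_def mult_mat_vec_def row_def lessThan_atLeast0
      sum_distrib_left mult.assoc intro!: sum.cong)

lemma bf_cong:
  assumes "\<And>i. i < d \<Longrightarrow> f i = f' i" "\<And>i. i < d \<Longrightarrow> g i = g' i"
  shows "bf d A f g = bf d A f' g'"
  using assms unfolding bf_def by (auto intro!: sum.cong)

lemma psd_bf:
  "psd d A \<longleftrightarrow> A \<in> carrier_mat d d \<and> (\<forall>f. Im (bf d A f f) = 0 \<and> Re (bf d A f f) \<ge> 0)"
proof
  assume p: "psd d A"
  then have A: "A \<in> carrier_mat d d" unfolding psd_def by simp
  show "A \<in> carrier_mat d d \<and> (\<forall>f. Im (bf d A f f) = 0 \<and> Re (bf d A f f) \<ge> 0)"
  proof (intro conjI allI A)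
    fix f :: "nat \<Rightarrow> complex"
    have v: "vec d f \<in> carrier_vec d" by simp
    have "bf d A f f = bf d A (($) (vec d f)) (($) (vec d f))" by (rule bf_cong) auto
    also have "\<dots> = conjugate (vec d f) \<bullet> (A *\<^sub>v vec d f)" using cscalar_mult_eq_bf[OF A v] by simp
    finally have e: "bf d A f f = conjugate (vec d f) \<bullet> (A *\<^sub>v vec d f)" .
    show "Im (bf d A f f) = 0" "Re (bf d A f f) \<ge> 0" using p v unfolding e psd_def by auto
  qed
next
  assume "A \<in> carrier_mat d d \<and> (\<forall>f. Im (bf d A f f) = 0 \<and> Re (bf d A f f) \<ge> 0)"
  then show "psd d A" unfolding psd_def using cscalar_mult_eq_bf by auto
qed

lemma bf_expand:
  "bf d A (\<lambda>i. f i + t * g i) (\<lambda>i. f i + t * g i) =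
     bf d A f f + t * bf d A f g + cnj t * bf d A g f + cnj t * t * bf d A g g"
  unfolding bf_def
  by (simp add: algebra_simps sum.distrib sum_distrib_left)

lemma bf_delta_left:
  assumes "a < d"
  shows "bf d A (\<lambda>i. if i = a then 1 else 0) g = (\<Sum>j<d. A $$ (a,j) * g j)"
proof -
  have "bf d A (\<lambda>i. if i = a then 1 else 0) g = (\<Sum>i<d. if i = a then (\<Sum>j<d. A $$ (a,j) * g j) else 0)"
    unfolding bf_def by (intro sum.cong) auto
  also have "\<dots> = (\<Sum>j<d. A $$ (a,j) * g j)" using assms by (simp add: sum.delta)
  finally show ?thesis .
qed

lemma bf_delta_right:
  assumes "b < d"
  shows "bf d A f (\<lambda>j. if j = b then 1 else 0) = (\<Sum>i<d. cnj (f i) * A $$ (i,b))"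
proof -
  have "bf d A f (\<lambda>j. if j = b then 1 else 0) = (\<Sum>i<d. \<Sum>j<d. if j = b then cnj (f i) * A $$ (i,b) else 0)"
    unfolding bf_def by (intro sum.cong) auto
  also have "\<dots> = (\<Sum>i<d. cnj (f i) * A $$ (i,b))" using assms by (simp add: sum.delta)
  finally show ?thesis .
qed

lemma bf_delta:
  assumes "a < d" "b < d"
  shows "bf d A (\<lambda>i. if i = a then 1 else 0) (\<lambda>j. if j = b then 1 else 0) = A $$ (a,b)"
proof -
  have "bf d A (\<lambda>i. if i = a then 1 else 0) (\<lambda>j. if j = b then 1 else 0) = (\<Sum>j<d. if j = b then A $$ (a,b) else 0)"
    unfolding bf_delta_left[OF assms(1)] by (intro sum.cong) auto
  then show ?thesis using assms by (simp add: sum.delta)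
qed

lemma psd_herm_bf:
  assumes p: "psd d A"
  shows "bf d A g f = cnj (bf d A f g)"
proof -
  have r: "Im (bf d A h h) = 0" for h using p unfolding psd_bf by auto
  have e1: "Im (bf d A f g + bf d A g f) = 0"
    using r[of "\<lambda>i. f i + 1 * g i"] r[of f] r[of g] unfolding bf_expand by simp
  have e2: "Re (bf d A f g - bf d A g f) = 0"
    using r[of "\<lambda>i. f i + \<i> * g i"] r[of f] r[of g] unfolding bf_expand by simp
  show ?thesis using e1 e2 by (simp add: complex_eq_iff)
qed

lemma psd_herm:
  assumes p: "psd d A" and "a < d" "b < d"
  shows "A $$ (b,a) = cnj (A $$ (a,b))"
  using psd_herm_bf[OF p, of "\<lambda>j. if j = b then 1 else 0" "\<lambda>i. if i = a then 1 else 0"]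
    bf_delta[OF assms(2,3), of A] bf_delta[OF assms(3,2), of A] by simp

lemma psd_diag:
  assumes p: "psd d A" and a: "a < d"
  shows "Im (A $$ (a,a)) = 0" "Re (A $$ (a,a)) \<ge> 0"
  using p bf_delta[OF a a, of A] unfolding psd_bf by metis+


lemma psd_real:
  assumes p: "psd d A"
  shows "bf d A f f = complex_of_real (Re (bf d A f f))"
  using p unfolding psd_bf by (simp add: complex_eq_iff)

lemma psd_CS:
  assumes p: "psd d A"
  shows "(cmod (bf d A w f))^2 \<le> (Re (bf d A w w) + 1) * Re (bf d A f f)"
proof -
  define \<gamma> where "\<gamma> = bf d A w f"
  define \<alpha> where "\<alpha> = Re (bf d A w w)"
  define \<beta> where "\<beta> = Re (bf d A f f)"
  define s where "s = \<alpha> + 1"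
  have a0: "\<alpha> \<ge> 0" "\<beta> \<ge> 0" using p unfolding psd_bf \<alpha>_def \<beta>_def by auto
  have s0: "s > 0" using a0 unfolding s_def by simp
  have ww: "bf d A w w = complex_of_real \<alpha>" using psd_real[OF p] \<alpha>_def by simp
  have ff: "bf d A f f = complex_of_real \<beta>" using psd_real[OF p] \<beta>_def by simp
  have fw: "bf d A f w = cnj \<gamma>" using psd_herm_bf[OF p, of w f] \<gamma>_def by simp
  define t where "t = - \<gamma> * complex_of_real (1 / s)"
  define g where "g = (Re \<gamma>)^2 + (Im \<gamma>)^2"
  have "0 \<le> Re (bf d A (\<lambda>i. f i + t * w i) (\<lambda>i. f i + t * w i))" using p unfolding psd_bf by auto
  also have "Re (bf d A (\<lambda>i. f i + t * w i) (\<lambda>i. f i + t * w i)) = \<beta> - 2 * g / s + g * \<alpha> / s^2"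
    unfolding bf_expand ww ff fw \<gamma>_def[symmetric] t_def g_def
    by (simp add: power2_eq_square field_simps)
  finally have ineq: "0 \<le> \<beta> - 2 * g / s + g * \<alpha> / s^2" .
  have g0: "g \<ge> 0" unfolding g_def by simp
  have "0 \<le> \<beta> * s^2 - 2 * g * s + g * \<alpha>"
  proof -
    have "0 \<le> (\<beta> - 2 * g / s + g * \<alpha> / s^2) * s^2" using ineq s0 by simp
    also have "\<dots> = \<beta> * s^2 - 2 * g * s + g * \<alpha>" using s0 by (simp add: field_simps power2_eq_square)
    finally show ?thesis .
  qed
  then have "g * s \<le> \<beta> * s * s" using g0 a0 unfolding s_def by (simp add: power2_eq_square algebra_simps)
  then have "g \<le> \<beta> * s" using s0 by (metis mult_le_cancel_right_pos mult.commute mult.left_commute)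
  moreover have "(cmod \<gamma>)^2 = g" unfolding g_def by (simp add: cmod_power2)
  ultimately show ?thesis unfolding \<gamma>_def s_def \<beta>_def \<alpha>_def by (simp add: mult.commute)
qed

lemma psd_bf_zero:
  assumes p: "psd d A" and z: "Re (bf d A f f) = 0" and a: "a < d"
  shows "(\<Sum>j<d. A $$ (a,j) * f j) = 0"
proof -
  have "(cmod (bf d A (\<lambda>i. if i = a then 1 else 0) f))^2 \<le> 0"
    using psd_CS[OF p, of "\<lambda>i. if i = a then 1 else 0" f] z by simp
  then show ?thesis using bf_delta_left[OF a] by simp
qed

definition gram :: "nat \<Rightarrow> nat \<Rightarrow> (nat \<Rightarrow> nat \<Rightarrow> complex) \<Rightarrow> complex mat" where
  "gram d m G = mat d d (\<lambda>(a,b). \<Sum>t<m. G a t * cnj (G b t))"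

lemma gram_carrier[simp]: "gram d m G \<in> carrier_mat d d"
  unfolding gram_def by simp

lemma gram_index[simp]: "a < d \<Longrightarrow> b < d \<Longrightarrow> gram d m G $$ (a,b) = (\<Sum>t<m. G a t * cnj (G b t))"
  unfolding gram_def by simp

lemma bf_gram:
  "bf d (gram d m G) f f = complex_of_real (\<Sum>t<m. (cmod (\<Sum>b<d. cnj (G b t) * f b))^2)"
proof -
  define z where "z t = (\<Sum>b<d. cnj (G b t) * f b)" for t
  have cz: "cnj (z t) = (\<Sum>i<d. cnj (f i) * G i t)" for t unfolding z_def by (simp add: mult.commute)
  have "bf d (gram d m G) f f = (\<Sum>i<d. \<Sum>j<d. \<Sum>t<m. cnj (f i) * G i t * (cnj (G j t) * f j))"
    unfolding bf_def gram_def by (intro sum.cong refl) (simp add: sum_distrib_left sum_distrib_right mult.assoc)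
  also have "\<dots> = (\<Sum>i<d. \<Sum>t<m. \<Sum>j<d. cnj (f i) * G i t * (cnj (G j t) * f j))"
    by (rule sum.cong[OF refl]) (rule sum.swap)
  also have "\<dots> = (\<Sum>t<m. \<Sum>i<d. \<Sum>j<d. cnj (f i) * G i t * (cnj (G j t) * f j))"
    by (rule sum.swap)
  also have "\<dots> = (\<Sum>t<m. cnj (z t) * z t)"
    unfolding cz by (simp only: z_def sum_product)
  also have "\<dots> = (\<Sum>t<m. complex_of_real ((cmod (z t))^2))"
    by (intro sum.cong refl) (metis complex_norm_square mult.commute)
  finally show ?thesis unfolding z_def by simp
qed

lemma psd_gram: "psd d (gram d m G)"
  unfolding psd_bf bf_gram by (auto intro: sum_nonneg)

lemma bf_lin:
  assumes "A \<in> carrier_mat d d" "B \<in> carrier_mat d d"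
  shows "bf d (a \<cdot>\<^sub>m A + b \<cdot>\<^sub>m B) f g = a * bf d A f g + b * bf d B f g"
  using assms unfolding bf_def
  by (simp add: sum_distrib_left sum.distrib algebra_simps)

lemma psd_lin:
  assumes "psd d A" "psd d B" "a \<ge> 0" "b \<ge> 0"
  shows "psd d (complex_of_real a \<cdot>\<^sub>m A + complex_of_real b \<cdot>\<^sub>m B)"
proof -
  have c: "A \<in> carrier_mat d d" "B \<in> carrier_mat d d" using assms unfolding psd_def by auto
  show ?thesis unfolding psd_bf
    using assms(1,2) c bf_lin[OF c] assms(3,4) unfolding psd_bf by auto
qed

definition orthonormal :: "nat \<Rightarrow> nat \<Rightarrow> (nat \<Rightarrow> nat \<Rightarrow> complex) \<Rightarrow> bool" where
  "orthonormal d R u \<longleftrightarrow> (\<forall>i<R. \<forall>i'<R. (\<Sum>a<d. cnj (u i a) * u i' a) = (if i = i' then 1 else 0))"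

definition proj :: "nat \<Rightarrow> nat \<Rightarrow> (nat \<Rightarrow> nat \<Rightarrow> complex) \<Rightarrow> complex mat" where
  "proj d R u = gram d R (\<lambda>a i. u i a)"

lemma proj_index: "a < d \<Longrightarrow> b < d \<Longrightarrow> proj d R u $$ (a,b) = (\<Sum>i<R. u i a * cnj (u i b))"
  unfolding proj_def by simp

lemma proj_idem:
  assumes o: "orthonormal d R u" and ab: "a < d" "b < d"
  shows "(\<Sum>c<d. proj d R u $$ (a,c) * proj d R u $$ (c,b)) = proj d R u $$ (a,b)"
proof -
  have "(\<Sum>c<d. proj d R u $$ (a,c) * proj d R u $$ (c,b))
      = (\<Sum>c<d. \<Sum>i<R. \<Sum>i'<R. u i a * cnj (u i' b) * (cnj (u i c) * u i' c))"
    using ab by (intro sum.cong refl) (simp add: proj_index sum_distrib_left sum_distrib_right algebra_simps)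
  also have "\<dots> = (\<Sum>i<R. \<Sum>c<d. \<Sum>i'<R. u i a * cnj (u i' b) * (cnj (u i c) * u i' c))"
    by (rule sum.swap)
  also have "\<dots> = (\<Sum>i<R. \<Sum>i'<R. \<Sum>c<d. u i a * cnj (u i' b) * (cnj (u i c) * u i' c))"
    by (rule sum.cong[OF refl]) (rule sum.swap)
  also have "\<dots> = (\<Sum>i<R. \<Sum>i'<R. u i a * cnj (u i' b) * (\<Sum>c<d. cnj (u i c) * u i' c))"
    by (simp add: sum_distrib_left)
  also have "\<dots> = (\<Sum>i<R. \<Sum>i'<R. if i = i' then u i a * cnj (u i' b) else 0)"
    using o unfolding orthonormal_def by (intro sum.cong refl) auto
  also have "\<dots> = (\<Sum>i<R. u i a * cnj (u i b))" by (simp add: sum.delta)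
  finally show ?thesis using ab by (simp add: proj_index)
qed

lemma proj_trace:
  assumes o: "orthonormal d R u"
  shows "(\<Sum>a<d. proj d R u $$ (a,a)) = of_nat R"
proof -
  have "(\<Sum>a<d. proj d R u $$ (a,a)) = (\<Sum>a<d. \<Sum>i<R. cnj (u i a) * u i a)"
    by (intro sum.cong refl) (simp add: proj_index mult.commute)
  also have "\<dots> = (\<Sum>i<R. \<Sum>a<d. cnj (u i a) * u i a)"
    by (rule sum.swap)
  also have "\<dots> = (\<Sum>i<R. 1)" using o unfolding orthonormal_def by (intro sum.cong refl) auto
  finally show ?thesis by simp
qed

lemma proj_fix:
  assumes o: "orthonormal d R u" and a: "a < d" and v: "\<forall>b<d. v b = (\<Sum>i<R. c i * u i b)"
  shows "(\<Sum>b<d. proj d R u $$ (a,b) * v b) = v a"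
proof -
  have "(\<Sum>b<d. proj d R u $$ (a,b) * v b) = (\<Sum>b<d. \<Sum>i<R. \<Sum>i'<R. u i a * c i' * (cnj (u i b) * u i' b))"
    using a v by (intro sum.cong refl) (simp add: proj_index sum_distrib_left sum_distrib_right algebra_simps)
  also have "\<dots> = (\<Sum>i<R. \<Sum>b<d. \<Sum>i'<R. u i a * c i' * (cnj (u i b) * u i' b))"
    by (rule sum.swap)
  also have "\<dots> = (\<Sum>i<R. \<Sum>i'<R. \<Sum>b<d. u i a * c i' * (cnj (u i b) * u i' b))"
    by (rule sum.cong[OF refl]) (rule sum.swap)
  also have "\<dots> = (\<Sum>i<R. \<Sum>i'<R. u i a * c i' * (\<Sum>b<d. cnj (u i b) * u i' b))"
    by (simp add: sum_distrib_left)
  also have "\<dots> = (\<Sum>i<R. \<Sum>i'<R. if i = i' then u i a * c i' else 0)"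
    using o unfolding orthonormal_def by (intro sum.cong refl) auto
  also have "\<dots> = (\<Sum>i<R. c i * u i a)" by (simp add: sum.delta mult.commute)
  finally show ?thesis using v a by simp
qed

lemma herm_idem_gram:
  assumes M: "M \<in> carrier_mat d d"
    and h: "\<And>a b. a < d \<Longrightarrow> b < d \<Longrightarrow> M $$ (b,a) = cnj (M $$ (a,b))"
    and i: "\<And>a b. a < d \<Longrightarrow> b < d \<Longrightarrow> (\<Sum>c<d. M $$ (a,c) * M $$ (c,b)) = M $$ (a,b)"
  shows "M = gram d d (\<lambda>a t. M $$ (a,t))"
proof (rule eq_matI)
  fix a b assume ab: "a < dim_row (gram d d (\<lambda>a t. M $$ (a,t)))" "b < dim_col (gram d d (\<lambda>a t. M $$ (a,t)))"
  then have ab: "a < d" "b < d" unfolding gram_def by auto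
  have "(\<Sum>t<d. M $$ (a,t) * cnj (M $$ (b,t))) = (\<Sum>t<d. M $$ (a,t) * M $$ (t,b))"
    using ab h by (intro sum.cong refl) (metis complex_cnj_cnj lessThan_iff)
  then show "M $$ (a,b) = gram d d (\<lambda>a t. M $$ (a,t)) $$ (a,b)" using ab i by simp
qed (use M in \<open>auto simp: gram_def\<close>)

lemma id_tensor_1:
  assumes M: "M \<in> carrier_mat d d" and EM: "E M \<in> carrier_mat d d"
  shows "id_tensor 1 d E M = E M"
proof -
  have "mat d d (\<lambda>(a, b). M $$ (0 * d + a, 0 * d + b)) = M"
    using M by (intro eq_matI) auto
  moreover have "i < d \<Longrightarrow> i div d = 0" for i by simp
  moreover have "i < d \<Longrightarrow> i mod d = i" for i by simp
  ultimately show ?thesis unfolding id_tensor_def using EM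
    by (intro eq_matI) auto
qed

lemma ucptp_pos:
  assumes E: "unital_cptp d E" and p: "psd d M"
  shows "psd d (E M)"
proof -
  have M: "M \<in> carrier_mat d d" using p unfolding psd_def by simp
  have EM: "E M \<in> carrier_mat d d" using E M unfolding unital_cptp_def linear_on_def by auto
  have "\<forall>n M. psd (n * d) M \<longrightarrow> psd (n * d) (id_tensor n d E M)" using E unfolding unital_cptp_def completely_positive_def by blast
  then have "psd (1 * d) M \<longrightarrow> psd (1 * d) (id_tensor 1 d E M)" by blast
  then have "psd d (id_tensor 1 d E M)" using p by simp
  then show ?thesis using id_tensor_1[of M d E, OF M EM] by simp
qed

lemma ucptp_carrier:
  assumes E: "unital_cptp d E" and M: "M \<in> carrier_mat d d"
  shows "E M \<in> carrier_mat d d"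
  using E M unfolding unital_cptp_def linear_on_def by auto

lemma ucptp_lin:
  assumes E: "unital_cptp d E" and "A \<in> carrier_mat d d" "B \<in> carrier_mat d d"
  shows "E (a \<cdot>\<^sub>m A + b \<cdot>\<^sub>m B) = a \<cdot>\<^sub>m E A + b \<cdot>\<^sub>m E B"
  using E assms unfolding unital_cptp_def linear_on_def by auto

lemma mtrace_carrier: "A \<in> carrier_mat d d \<Longrightarrow> mtrace A = (\<Sum>i<d. A $$ (i,i))"
  unfolding mtrace_def by simp

lemma proj_carrier[simp]: "proj d R u \<in> carrier_mat d d"
  unfolding proj_def by simp

lemma proj_herm: "a < d \<Longrightarrow> b < d \<Longrightarrow> proj d R u $$ (b,a) = cnj (proj d R u $$ (a,b))"
  by (simp add: proj_index mult.commute)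

lemma psd_proj: "psd d (proj d R u)"
  unfolding proj_def by (rule psd_gram)

definition compl :: "nat \<Rightarrow> complex mat \<Rightarrow> complex mat" where
  "compl d P = 1 \<cdot>\<^sub>m 1\<^sub>m d + (-1) \<cdot>\<^sub>m P"

lemma compl_carrier[simp]: "P \<in> carrier_mat d d \<Longrightarrow> compl d P \<in> carrier_mat d d"
  unfolding compl_def by simp

lemma compl_index: "P \<in> carrier_mat d d \<Longrightarrow> a < d \<Longrightarrow> b < d \<Longrightarrow>
   compl d P $$ (a,b) = (if a = b then 1 else 0) - P $$ (a,b)"
  unfolding compl_def by auto

lemma delta_sum_l:
  fixes X :: "nat \<Rightarrow> complex"
  assumes "a < d" shows "(\<Sum>c<d. (if a = c then 1 else 0) * X c) = X a"
proof -
  have "(\<Sum>c<d. (if a = c then 1 else 0) * X c) = (\<Sum>c<d. if a = c then X c else 0)" by (rule sum.cong) auto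
  then show ?thesis using assms by (simp add: sum.delta)
qed

lemma delta_sum_r:
  fixes X :: "nat \<Rightarrow> complex"
  assumes "b < d" shows "(\<Sum>c<d. X c * (if c = b then 1 else 0)) = X b"
proof -
  have "(\<Sum>c<d. X c * (if c = b then 1 else 0)) = (\<Sum>c<d. if b = c then X c else 0)" by (rule sum.cong) auto
  then show ?thesis using assms by (simp add: sum.delta)
qed

lemma compl_gram:
  assumes o: "orthonormal d R u"
  shows "compl d (proj d R u) = gram d d (\<lambda>a t. compl d (proj d R u) $$ (a,t))"
proof -
  let ?P = "proj d R u" let ?Q = "compl d ?P"
  have h: "?Q $$ (b,a) = cnj (?Q $$ (a,b))" if "a < d" "b < d" for a b
    using that proj_herm[OF that, of R u] by (simp add: compl_index)
  have i: "(\<Sum>c<d. ?Q $$ (a,c) * ?Q $$ (c,b)) = ?Q $$ (a,b)" if ab: "a < d" "b < d" for a b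
  proof -
    have e: "?Q $$ (a,c) * ?Q $$ (c,b) = ((if a = c then 1 else 0) * (if c = b then 1 else 0) - (if a = c then 1 else 0) * ?P $$ (c,b))
         - (?P $$ (a,c) * (if c = b then 1 else 0) - ?P $$ (a,c) * ?P $$ (c,b))" if c: "c < d" for c
      using ab c by (simp add: compl_index algebra_simps)
    have "(\<Sum>c<d. ?Q $$ (a,c) * ?Q $$ (c,b)) =
       ((\<Sum>c<d. (if a = c then 1 else 0) * (if c = b then 1 else 0)) - (\<Sum>c<d. (if a = c then 1 else 0) * ?P $$ (c,b)))
       - ((\<Sum>c<d. ?P $$ (a,c) * (if c = b then 1 else 0)) - (\<Sum>c<d. ?P $$ (a,c) * ?P $$ (c,b)))"
      apply (subst sum.cong[OF refl e], simp)
      by (simp only: sum_subtractf)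
    also have "\<dots> = ((if a = b then 1 else 0) - ?P $$ (a,b)) - (?P $$ (a,b) - ?P $$ (a,b))"
      unfolding delta_sum_l[OF ab(1)] delta_sum_r[OF ab(2)] proj_idem[OF o ab] by simp
    finally show ?thesis using ab by (simp add: compl_index)
  qed
  show "?Q = gram d d (\<lambda>a t. ?Q $$ (a,t))"
    by (rule herm_idem_gram[OF _ h i]) simp_all
qed

lemma compl_proj_psd:
  assumes o: "orthonormal d R u"
  shows "psd d (compl d (proj d R u))"
  using compl_gram[OF o] psd_gram[of d d "\<lambda>a t. compl d (proj d R u) $$ (a,t)"] by simp

lemma Pi_proj_diag: "j < d \<Longrightarrow> Pi_proj d k $$ (j,j) = (if j < k then 1 else 0)"
  unfolding Pi_proj_def by simp

lemma Pi_proj_carrier[simp]: "Pi_proj d k \<in> carrier_mat d d"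
  unfolding Pi_proj_def by simp

lemma Pi_proj_dim[simp]: "dim_row (Pi_proj d k) = d" "dim_col (Pi_proj d k) = d"
  unfolding Pi_proj_def by simp_all

lemma rank_upper:
  assumes E: "unital_cptp d E" and p: "psd d \<sigma>" and k: "k \<le> d"
    and Es: "E \<sigma> = (1 / of_nat k) \<cdot>\<^sub>m Pi_proj d k"
  shows "vec_space.rank d \<sigma> \<le> k"
proof -
  have sC: "\<sigma> \<in> carrier_mat d d" using p unfolding psd_def by simp
  let ?R = "vec_space.rank d \<sigma>"
  obtain u w where uw0: "(\<forall>i<?R. \<forall>i'<?R. (\<Sum>a<d. cnj (u i a) * u i' a) = (if i = i' then 1 else 0))
     \<and> (\<forall>i<?R. \<forall>a<d. u i a = (\<Sum>b<d. \<sigma> $$ (a,b) * w i b))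
     \<and> (\<forall>b<d. \<exists>c. \<forall>a<d. \<sigma> $$ (a,b) = (\<Sum>i<?R. c i * u i a))"
    using F1[OF sC] by blast
  have o0: "\<forall>i<?R. \<forall>i'<?R. (\<Sum>a<d. cnj (u i a) * u i' a) = (if i = i' then 1 else 0)"
    and uw: "\<forall>i<?R. \<forall>a<d. u i a = (\<Sum>b<d. \<sigma> $$ (a,b) * w i b)"
    using uw0 by blast+
  have o: "orthonormal d ?R u" using o0 unfolding orthonormal_def by blast
  let ?P = "proj d ?R u"
  define S where "S = (\<Sum>i<?R. Re (bf d \<sigma> (w i) (w i)) + 1)"
  have key: "(\<Sum>b<d. cnj (u i b) * f b) = bf d \<sigma> (w i) f" if i: "i < ?R" for i f
  proof -
    have "(\<Sum>b<d. cnj (u i b) * f b) = (\<Sum>b<d. \<Sum>c<d. cnj (w i c) * \<sigma> $$ (c,b) * f b)"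
    proof (rule sum.cong[OF refl])
      fix b assume b: "b \<in> {..<d}"
      have "cnj (u i b) = (\<Sum>c<d. cnj (\<sigma> $$ (b,c)) * cnj (w i c))"
        using uw i b by simp
      also have "\<dots> = (\<Sum>c<d. cnj (w i c) * \<sigma> $$ (c,b))"
      proof (rule sum.cong[OF refl])
        fix c assume "c \<in> {..<d}"
        then show "cnj (\<sigma> $$ (b,c)) * cnj (w i c) = cnj (w i c) * \<sigma> $$ (c,b)"
          using psd_herm[OF p, of b c] b by simp
      qed
      finally have "cnj (u i b) = (\<Sum>c<d. cnj (w i c) * \<sigma> $$ (c,b))" .
      then show "cnj (u i b) * f b = (\<Sum>c<d. cnj (w i c) * \<sigma> $$ (c,b) * f b)"
        by (simp add: sum_distrib_right)
    qed
    also have "\<dots> = (\<Sum>c<d. \<Sum>b<d. cnj (w i c) * \<sigma> $$ (c,b) * f b)" by (rule sum.swap)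
    finally show ?thesis unfolding bf_def .
  qed
  have Pbound: "Re (bf d ?P f f) \<le> S * Re (bf d \<sigma> f f)" for f
  proof -
    have "Re (bf d ?P f f) = (\<Sum>i<?R. (cmod (\<Sum>b<d. cnj (u i b) * f b))^2)"
      unfolding proj_def bf_gram by simp
    also have "\<dots> = (\<Sum>i<?R. (cmod (bf d \<sigma> (w i) f))^2)"
      using key by simp
    also have "\<dots> \<le> (\<Sum>i<?R. (Re (bf d \<sigma> (w i) (w i)) + 1) * Re (bf d \<sigma> f f))"
      by (rule sum_mono) (rule psd_CS[OF p])
    also have "\<dots> = S * Re (bf d \<sigma> f f)" unfolding S_def by (rule sum_distrib_right[symmetric])
    finally show ?thesis .
  qed
  have S0: "S \<ge> 0" unfolding S_def
  proof (rule sum_nonneg)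
    fix i show "0 \<le> Re (bf d \<sigma> (w i) (w i)) + 1" using p unfolding psd_bf by (smt (verit))
  qed
  have psd1: "psd d (complex_of_real S \<cdot>\<^sub>m \<sigma> + (-1) \<cdot>\<^sub>m ?P)"
    unfolding psd_bf
  proof (intro conjI allI)
    show "complex_of_real S \<cdot>\<^sub>m \<sigma> + (-1) \<cdot>\<^sub>m ?P \<in> carrier_mat d d" using sC by simp
    fix f
    have e: "bf d (complex_of_real S \<cdot>\<^sub>m \<sigma> + (-1) \<cdot>\<^sub>m ?P) f f = complex_of_real S * bf d \<sigma> f f - bf d ?P f f"
      using bf_lin[OF sC proj_carrier] by simp
    have r1: "Im (bf d \<sigma> f f) = 0" using p unfolding psd_bf by auto
    have r2: "Im (bf d ?P f f) = 0" using psd_proj unfolding psd_bf by auto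
    show "Im (bf d (complex_of_real S \<cdot>\<^sub>m \<sigma> + (-1) \<cdot>\<^sub>m ?P) f f) = 0" unfolding e using r1 r2 by simp
    show "Re (bf d (complex_of_real S \<cdot>\<^sub>m \<sigma> + (-1) \<cdot>\<^sub>m ?P) f f) \<ge> 0" unfolding e using Pbound[of f] by simp
  qed
  have EPp: "psd d (E ?P)" using ucptp_pos[OF E psd_proj] .
  have EPC: "E ?P \<in> carrier_mat d d" using ucptp_carrier[OF E proj_carrier] .
  have E1: "psd d (complex_of_real S \<cdot>\<^sub>m E \<sigma> + (-1) \<cdot>\<^sub>m E ?P)"
    using ucptp_pos[OF E psd1] ucptp_lin[OF E sC proj_carrier] by simp
  have zero: "E ?P $$ (j,j) = 0" if j: "j < d" "k \<le> j" for j
  proof -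
    have "Re ((complex_of_real S \<cdot>\<^sub>m E \<sigma> + (-1) \<cdot>\<^sub>m E ?P) $$ (j,j)) \<ge> 0" using psd_diag(2)[OF E1 j(1)] .
    moreover have "E \<sigma> $$ (j,j) = 0" using j unfolding Es by (simp add: Pi_proj_diag)
    ultimately have "Re (E ?P $$ (j,j)) \<le> 0" using j EPC ucptp_carrier[OF E sC] by simp
    moreover have "Re (E ?P $$ (j,j)) \<ge> 0" "Im (E ?P $$ (j,j)) = 0" using psd_diag[OF EPp j(1)] by auto
    ultimately show ?thesis by (simp add: complex_eq_iff)
  qed
  have le1: "Re (E ?P $$ (j,j)) \<le> 1" if j: "j < d" for j
  proof -
    have "psd d (E (compl d ?P))" using ucptp_pos[OF E compl_proj_psd[OF o]] .
    moreover have "E (compl d ?P) = 1 \<cdot>\<^sub>m 1\<^sub>m d + (-1) \<cdot>\<^sub>m E ?P"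
      unfolding compl_def using ucptp_lin[OF E one_carrier_mat proj_carrier] E unfolding unital_cptp_def by simp
    ultimately have "psd d (1 \<cdot>\<^sub>m 1\<^sub>m d + (-1) \<cdot>\<^sub>m E ?P)" by simp
    from psd_diag(2)[OF this j] show ?thesis using j EPC by simp
  qed
  have "mtrace (E ?P) = mtrace ?P" using E proj_carrier unfolding unital_cptp_def trace_preserving_def by blast
  also have "\<dots> = of_nat ?R" using proj_trace[OF o] mtrace_carrier[OF proj_carrier] by simp
  finally have tr: "(\<Sum>j<d. E ?P $$ (j,j)) = of_nat ?R" using mtrace_carrier[OF EPC] by simp
  have "(\<Sum>j<d. E ?P $$ (j,j)) = (\<Sum>j<k. E ?P $$ (j,j)) + (\<Sum>j\<in>{k..<d}. E ?P $$ (j,j))"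
    using k by (simp add: lessThan_atLeast0 sum.atLeastLessThan_concat)
  also have "(\<Sum>j\<in>{k..<d}. E ?P $$ (j,j)) = 0" using zero by (intro sum.neutral) auto
  finally have "real ?R = (\<Sum>j<k. Re (E ?P $$ (j,j)))" using tr
    by (metis Re_complex_of_real Re_sum add.right_neutral of_real_of_nat_eq)
  also have "\<dots> \<le> (\<Sum>j<k. 1)" using le1 k by (intro sum_mono) auto
  finally show ?thesis by simp
qed

lemma sum_split_nd:
  fixes n d :: nat
  shows "(\<Sum>k<n*d. F k) = (\<Sum>p<n. \<Sum>a<d. F (p*d + a))"
proof (induction n)
  case 0 then show ?case by simp
next
  case (Suc n)
  have "(\<Sum>k<Suc n * d. F k) = (\<Sum>k\<in>{0..<n*d}. F k) + (\<Sum>k\<in>{n*d..<d+n*d}. F k)"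
    by (simp add: lessThan_atLeast0 sum.atLeastLessThan_concat)
  also have "(\<Sum>k\<in>{n*d..<d+n*d}. F k) = (\<Sum>a<d. F (n*d + a))"
    using sum.shift_bounds_nat_ivl[of F 0 "n*d" d] by (simp add: lessThan_atLeast0 add.commute)
  finally show ?case using Suc by (simp add: lessThan_atLeast0)
qed

definition blk :: "nat \<Rightarrow> complex mat \<Rightarrow> nat \<Rightarrow> nat \<Rightarrow> complex mat" where
  "blk d M p q = mat d d (\<lambda>(i,j). M $$ (p*d+i, q*d+j))"

lemma divmod_simp1: "a < (d::nat) \<Longrightarrow> (p*d + a) div d = p" by simp
lemma divmod_simp2: "a < (d::nat) \<Longrightarrow> (p*d + a) mod d = a" by simp
lemma idx_lt: "p < n \<Longrightarrow> a < (d::nat) \<Longrightarrow> p*d + a < n*d"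
proof -
  assume "p < n" "a < d"
  then have "p*d + a < Suc p * d" by simp
  also have "\<dots> \<le> n * d" using \<open>p < n\<close> by (intro mult_le_mono1) simp
  finally show ?thesis .
qed
lemmas divmod_simps = divmod_simp1 divmod_simp2 idx_lt

lemma delta_mid:
  fixes A X C :: "nat \<Rightarrow> complex"
  assumes "a < d"
  shows "(\<Sum>b<d. A b * (if a = b then X b else 0) * C b) = A a * X a * C a"
proof -
  have "(\<Sum>b<d. A b * (if a = b then X b else 0) * C b) = (\<Sum>b<d. if a = b then A b * X b * C b else 0)"
    by (rule sum.cong) auto
  then show ?thesis using assms by (simp add: sum.delta)
qed

lemma delta_mid2:
  fixes A X :: complex and C :: "nat \<Rightarrow> complex"
  assumes "a < d"
  shows "(\<Sum>b<d. A * (if a = b then X else 0) * C b) = A * X * C a"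
proof -
  have "(\<Sum>b<d. A * (if a = b then X else 0) * C b) = (\<Sum>b<d. if a = b then A * X * C b else 0)"
    by (rule sum.cong) auto
  then show ?thesis using assms by (simp add: sum.delta)
qed

lemma bf_blockvec:
  "bf (n*d) M (\<lambda>k. f ((k div d)*d + a) * G (k mod d)) (\<lambda>k. f ((k div d)*d + a) * G (k mod d))
   = (\<Sum>p<n. \<Sum>q<n. cnj (f (p*d+a)) * f (q*d+a) * bf d (blk d M p q) G G)"
proof -
  have "bf (n*d) M (\<lambda>k. f ((k div d)*d + a) * G (k mod d)) (\<lambda>k. f ((k div d)*d + a) * G (k mod d))
     = (\<Sum>p<n. \<Sum>i<d. \<Sum>q<n. \<Sum>j<d. cnj (f (p*d+a) * G i) * M $$ (p*d+i, q*d+j) * (f (q*d+a) * G j))"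
    unfolding bf_def sum_split_nd
    by (intro sum.cong refl) (simp add: divmod_simps)
  also have "\<dots> = (\<Sum>p<n. \<Sum>q<n. \<Sum>i<d. \<Sum>j<d. cnj (f (p*d+a) * G i) * M $$ (p*d+i, q*d+j) * (f (q*d+a) * G j))"
    by (rule sum.cong[OF refl]) (rule sum.swap)
  also have "\<dots> = (\<Sum>p<n. \<Sum>q<n. cnj (f (p*d+a)) * f (q*d+a) * bf d (blk d M p q) G G)"
    unfolding bf_def blk_def
    by (intro sum.cong refl) (simp add: sum_distrib_left algebra_simps)
  finally show ?thesis .
qed

lemma diag_cp:
  fixes cc :: "nat \<Rightarrow> real" and G :: "nat \<Rightarrow> nat \<Rightarrow> nat \<Rightarrow> complex" and m :: nat
  assumes c: "\<And>a. cc a \<ge> 0" and M: "psd (n*d) M"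
  defines "E \<equiv> (\<lambda>X. mat d d (\<lambda>(a,b). if a = b then complex_of_real (cc a) * (\<Sum>t<m. bf d X (G a t) (G a t)) else 0))"
  shows "psd (n*d) (id_tensor n d E M)"
proof -
  let ?T = "id_tensor n d E M"
  have T: "?T \<in> carrier_mat (n*d) (n*d)" unfolding id_tensor_def by simp
  define x where "x f a t = (\<lambda>k. f ((k div d)*d + a) * G a t (k mod d))" for f a t
  have eq: "bf (n*d) ?T f f = (\<Sum>a<d. complex_of_real (cc a) * (\<Sum>t<m. bf (n*d) M (x f a t) (x f a t)))" for f
  proof -
    have "bf (n*d) ?T f f = (\<Sum>p<n. \<Sum>a<d. \<Sum>q<n. \<Sum>b<d.
        cnj (f (p*d+a)) * (if a = b then complex_of_real (cc a) * (\<Sum>t<m. bf d (blk d M p q) (G a t) (G a t)) else 0) * f (q*d+b))"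
      unfolding bf_def sum_split_nd
      by (intro sum.cong refl) (simp add: id_tensor_def E_def divmod_simps blk_def bf_def)
    also have "\<dots> = (\<Sum>p<n. \<Sum>a<d. \<Sum>q<n.
        cnj (f (p*d+a)) * (complex_of_real (cc a) * (\<Sum>t<m. bf d (blk d M p q) (G a t) (G a t))) * f (q*d+a))"
      by (intro sum.cong refl) (rule delta_mid2, simp)
    also have "\<dots> = (\<Sum>a<d. \<Sum>p<n. \<Sum>q<n.
        cnj (f (p*d+a)) * (complex_of_real (cc a) * (\<Sum>t<m. bf d (blk d M p q) (G a t) (G a t))) * f (q*d+a))"
      by (rule sum.swap)
    also have "\<dots> = (\<Sum>a<d. complex_of_real (cc a) * (\<Sum>t<m. \<Sum>p<n. \<Sum>q<n. cnj (f (p*d+a)) * f (q*d+a) * bf d (blk d M p q) (G a t) (G a t)))"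
    proof (rule sum.cong[OF refl])
      fix a
      have "(\<Sum>p<n. \<Sum>q<n. cnj (f (p*d+a)) * (complex_of_real (cc a) * (\<Sum>t<m. bf d (blk d M p q) (G a t) (G a t))) * f (q*d+a))
          = complex_of_real (cc a) * (\<Sum>p<n. \<Sum>q<n. \<Sum>t<m. cnj (f (p*d+a)) * f (q*d+a) * bf d (blk d M p q) (G a t) (G a t))"
        by (simp add: sum_distrib_left algebra_simps)
      also have "(\<Sum>p<n. \<Sum>q<n. \<Sum>t<m. cnj (f (p*d+a)) * f (q*d+a) * bf d (blk d M p q) (G a t) (G a t))
          = (\<Sum>p<n. \<Sum>t<m. \<Sum>q<n. cnj (f (p*d+a)) * f (q*d+a) * bf d (blk d M p q) (G a t) (G a t))"
        by (rule sum.cong[OF refl]) (rule sum.swap)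
      also have "\<dots> = (\<Sum>t<m. \<Sum>p<n. \<Sum>q<n. cnj (f (p*d+a)) * f (q*d+a) * bf d (blk d M p q) (G a t) (G a t))"
        by (rule sum.swap)
      finally show "(\<Sum>p<n. \<Sum>q<n. cnj (f (p*d+a)) * (complex_of_real (cc a) * (\<Sum>t<m. bf d (blk d M p q) (G a t) (G a t))) * f (q*d+a))
          = complex_of_real (cc a) * (\<Sum>t<m. \<Sum>p<n. \<Sum>q<n. cnj (f (p*d+a)) * f (q*d+a) * bf d (blk d M p q) (G a t) (G a t))" .
    qed
    also have "\<dots> = (\<Sum>a<d. complex_of_real (cc a) * (\<Sum>t<m. bf (n*d) M (x f a t) (x f a t)))"
      unfolding x_def bf_blockvec ..
    finally show ?thesis .
  qed
  show ?thesis unfolding psd_bf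
  proof (intro conjI allI T)
    fix f
    have r: "Im (bf (n*d) M g g) = 0" "Re (bf (n*d) M g g) \<ge> 0" for g using M unfolding psd_bf by auto
    show "Im (bf (n*d) ?T f f) = 0" unfolding eq using r by (simp add: Im_sum)
    show "Re (bf (n*d) ?T f f) \<ge> 0" unfolding eq using r c
      by (simp add: Re_sum) (intro sum_nonneg mult_nonneg_nonneg, auto)
  qed
qed

lemma sum_bf_gram:
  "(\<Sum>t<m. bf d X (\<lambda>i. G i t) (\<lambda>i. G i t)) = (\<Sum>i<d. \<Sum>j<d. X $$ (i,j) * gram d m G $$ (j,i))"
proof -
  have "(\<Sum>t<m. bf d X (\<lambda>i. G i t) (\<lambda>i. G i t)) = (\<Sum>t<m. \<Sum>i<d. \<Sum>j<d. X $$ (i,j) * (G j t * cnj (G i t)))"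
    unfolding bf_def by (intro sum.cong refl) (simp add: algebra_simps)
  also have "\<dots> = (\<Sum>i<d. \<Sum>t<m. \<Sum>j<d. X $$ (i,j) * (G j t * cnj (G i t)))" by (rule sum.swap)
  also have "\<dots> = (\<Sum>i<d. \<Sum>j<d. \<Sum>t<m. X $$ (i,j) * (G j t * cnj (G i t)))"
    by (rule sum.cong[OF refl]) (rule sum.swap)
  also have "\<dots> = (\<Sum>i<d. \<Sum>j<d. X $$ (i,j) * gram d m G $$ (j,i))"
    by (intro sum.cong refl) (simp add: sum_distrib_left)
  finally show ?thesis .
qed

definition chG :: "nat \<Rightarrow> nat \<Rightarrow> (nat \<Rightarrow> nat \<Rightarrow> complex) \<Rightarrow> nat \<Rightarrow> nat \<Rightarrow> nat \<Rightarrow> complex" where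
  "chG d R u a t i = (if a < R then (if t < R then u t i else 0) else compl d (proj d R u) $$ (i,t))"

lemma chG_low0: "a < R \<Longrightarrow> \<not> t < R \<Longrightarrow> chG d R u a t = (\<lambda>i. 0)"
  by (rule ext) (simp add: chG_def)
lemma chG_low: "a < R \<Longrightarrow> t < R \<Longrightarrow> chG d R u a t = (\<lambda>i. u t i)"
  by (rule ext) (simp add: chG_def)
lemma chG_high: "\<not> a < R \<Longrightarrow> chG d R u a t = (\<lambda>i. compl d (proj d R u) $$ (i,t))"
  by (rule ext) (simp add: chG_def)

definition chc :: "nat \<Rightarrow> nat \<Rightarrow> nat \<Rightarrow> real" where
  "chc d R a = (if a < R then 1 / real R else 1 / real (d - R))"

definition chan :: "nat \<Rightarrow> nat \<Rightarrow> (nat \<Rightarrow> nat \<Rightarrow> complex) \<Rightarrow> complex mat \<Rightarrow> complex mat" where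
  "chan d R u = (\<lambda>X. mat d d (\<lambda>(a,b). if a = b then complex_of_real (chc d R a) *
       (\<Sum>t<d. bf d X (chG d R u a t) (chG d R u a t)) else 0))"

definition sP :: "nat \<Rightarrow> complex mat \<Rightarrow> complex mat \<Rightarrow> complex" where
  "sP d P X = (\<Sum>i<d. \<Sum>j<d. X $$ (i,j) * P $$ (j,i))"

lemma bf_zero_vec: "bf d X (\<lambda>i. 0) (\<lambda>i. 0) = 0" unfolding bf_def by simp

lemma chan_sum_low:
  assumes a: "a < R" and R: "R \<le> d"
  shows "(\<Sum>t<d. bf d X (chG d R u a t) (chG d R u a t)) = sP d (proj d R u) X"
proof -
  have "(\<Sum>t<d. bf d X (chG d R u a t) (chG d R u a t)) =
     (\<Sum>t\<in>{0..<R}. bf d X (chG d R u a t) (chG d R u a t)) + (\<Sum>t\<in>{R..<d}. bf d X (chG d R u a t) (chG d R u a t))"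
    using R by (simp add: lessThan_atLeast0 sum.atLeastLessThan_concat)
  also have "(\<Sum>t\<in>{R..<d}. bf d X (chG d R u a t) (chG d R u a t)) = 0"
    using a by (intro sum.neutral) (auto simp: chG_low0 bf_zero_vec)
  also have "(\<Sum>t\<in>{0..<R}. bf d X (chG d R u a t) (chG d R u a t)) = (\<Sum>t<R. bf d X (\<lambda>i. u t i) (\<lambda>i. u t i))"
    using a by (intro sum.cong) (auto simp: chG_low)
  also have "\<dots> = sP d (proj d R u) X" unfolding sum_bf_gram sP_def proj_def ..
  finally show ?thesis by simp
qed

lemma chan_sum_high:
  assumes a: "\<not> a < R" and o: "orthonormal d R u"
  shows "(\<Sum>t<d. bf d X (chG d R u a t) (chG d R u a t)) = sP d (compl d (proj d R u)) X"
proof -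
  have "(\<Sum>t<d. bf d X (chG d R u a t) (chG d R u a t)) =
      (\<Sum>t<d. bf d X (\<lambda>i. compl d (proj d R u) $$ (i,t)) (\<lambda>i. compl d (proj d R u) $$ (i,t)))"
    using a by (simp add: chG_high)
  also have "\<dots> = sP d (compl d (proj d R u)) X"
    unfolding sum_bf_gram sP_def by (subst (2) compl_gram[OF o]) simp
  finally show ?thesis .
qed

lemma sP_compl:
  assumes X: "X \<in> carrier_mat d d" and that: "P \<in> carrier_mat d d"
  shows "sP d P X + sP d (compl d P) X = mtrace X"
proof -
  have "sP d P X + sP d (compl d P) X = (\<Sum>i<d. \<Sum>j<d. X $$ (i,j) * (if j = i then 1 else 0))"
    unfolding sP_def using that by (simp add: compl_index algebra_simps sum.distrib[symmetric])
  also have "\<dots> = (\<Sum>i<d. X $$ (i,i))" using delta_sum_r by (intro sum.cong refl) (simp add: delta_sum_r)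
  finally show ?thesis using mtrace_carrier[OF X] by simp
qed


lemma chan_carrier[simp]: "chan d R u X \<in> carrier_mat d d"
  unfolding chan_def by simp

lemma chan_dims[simp]: "dim_row (chan d R u X) = d" "dim_col (chan d R u X) = d"
  unfolding chan_def by simp_all

lemma chan_index: "a < d \<Longrightarrow> b < d \<Longrightarrow> chan d R u X $$ (a,b) = (if a = b then complex_of_real (chc d R a) *
       (\<Sum>t<d. bf d X (chG d R u a t) (chG d R u a t)) else 0)"
  unfolding chan_def by simp

lemma chan_diag:
  assumes o: "orthonormal d R u" and R: "R \<le> d" and a: "a < d"
  shows "chan d R u X $$ (a,a) = (if a < R then complex_of_real (1 / real R) * sP d (proj d R u) X
      else complex_of_real (1 / real (d - R)) * sP d (compl d (proj d R u)) X)"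
  using a chan_sum_low[OF _ R, of a X u] chan_sum_high[OF _ o, of a X] by (simp add: chan_index chc_def)

lemma compl_zero_full:
  assumes o: "orthonormal d R u" and R: "R = d"
  shows "compl d (proj d R u) = 0\<^sub>m d d"
proof -
  let ?Q = "compl d (proj d R u)"
  have diag: "?Q $$ (a,a) = (\<Sum>t<d. complex_of_real ((cmod (?Q $$ (a,t)))^2))" if a: "a < d" for a
  proof -
    have "?Q $$ (a,a) = gram d d (\<lambda>a t. ?Q $$ (a,t)) $$ (a,a)" by (subst compl_gram[OF o]) simp
    also have "\<dots> = (\<Sum>t<d. ?Q $$ (a,t) * cnj (?Q $$ (a,t)))" using a by simp
    also have "\<dots> = (\<Sum>t<d. complex_of_real ((cmod (?Q $$ (a,t)))^2))"
      by (intro sum.cong refl) (rule complex_norm_square[symmetric])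
    finally show ?thesis .
  qed
  have "(\<Sum>a<d. ?Q $$ (a,a)) = (\<Sum>a<d. 1 - proj d R u $$ (a,a))"
    by (intro sum.cong refl) (simp add: compl_index)
  also have "\<dots> = of_nat d - of_nat R" using proj_trace[OF o] by (simp add: sum_subtractf)
  finally have "(\<Sum>a<d. ?Q $$ (a,a)) = 0" using R by simp
  then have "(\<Sum>a<d. \<Sum>t<d. complex_of_real ((cmod (?Q $$ (a,t)))^2)) = 0" using diag by simp
  then have "complex_of_real (\<Sum>a<d. \<Sum>t<d. (cmod (?Q $$ (a,t)))^2) = 0" by simp
  then have z: "(\<Sum>a<d. \<Sum>t<d. (cmod (?Q $$ (a,t)))^2) = 0" by (simp only: of_real_eq_0_iff)
  have "(\<Sum>t<d. (cmod (?Q $$ (a,t)))^2) = 0" if "a < d" for a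
    using z that by (subst (asm) sum_nonneg_eq_0_iff) (auto intro: sum_nonneg)
  then have "(cmod (?Q $$ (a,t)))^2 = 0" if "a < d" "t < d" for a t
    using that by (subst (asm) sum_nonneg_eq_0_iff) auto
  then show ?thesis by (intro eq_matI) (auto simp: compl_def proj_def gram_def)
qed

lemma sP_one: "sP d A (1\<^sub>m d) = (\<Sum>i<d. A $$ (i,i))"
proof -
  have "sP d A (1\<^sub>m d) = (\<Sum>i<d. \<Sum>j<d. (if i = j then 1 else 0) * A $$ (j,i))"
    unfolding sP_def by (intro sum.cong refl) simp
  also have "\<dots> = (\<Sum>i<d. A $$ (i,i))" by (intro sum.cong refl) (simp add: delta_sum_l)
  finally show ?thesis .
qed

lemma chan_tp:
  assumes o: "orthonormal d R u" and R: "R \<le> d" and R1: "1 \<le> R" and X: "X \<in> carrier_mat d d"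
  shows "mtrace (chan d R u X) = mtrace X"
proof -
  let ?P = "proj d R u" let ?Q = "compl d ?P"
  have "mtrace (chan d R u X) = (\<Sum>a<d. chan d R u X $$ (a,a))" by (simp add: mtrace_carrier)
  also have "\<dots> = (\<Sum>a\<in>{0..<R}. chan d R u X $$ (a,a)) + (\<Sum>a\<in>{R..<d}. chan d R u X $$ (a,a))"
    using R by (simp add: lessThan_atLeast0 sum.atLeastLessThan_concat)
  also have "(\<Sum>a\<in>{0..<R}. chan d R u X $$ (a,a)) = (\<Sum>a\<in>{0..<R}. complex_of_real (1 / real R) * sP d ?P X)"
    using R by (intro sum.cong refl) (simp add: chan_diag[OF o R])
  also have "\<dots> = sP d ?P X" using R1 by simp
  also have "(\<Sum>a\<in>{R..<d}. chan d R u X $$ (a,a)) = (\<Sum>a\<in>{R..<d}. complex_of_real (1 / real (d - R)) * sP d ?Q X)"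
    using R by (intro sum.cong refl) (simp add: chan_diag[OF o R])
  also have "\<dots> = sP d ?Q X"
  proof (cases "R = d")
    case True
    then show ?thesis using compl_zero_full[OF o True] by (simp add: sP_def)
  next
    case False
    then show ?thesis using R by (simp add: field_simps of_nat_diff)
  qed
  also have "sP d ?P X + sP d ?Q X = mtrace X" using sP_compl[OF X proj_carrier] .
  finally show ?thesis .
qed

lemma chan_unital:
  assumes o: "orthonormal d R u" and R: "R \<le> d" "1 \<le> R"
  shows "chan d R u (1\<^sub>m d) = 1\<^sub>m d"
proof (rule eq_matI)
  fix a b assume ab: "a < dim_row (1\<^sub>m d)" "b < dim_col (1\<^sub>m d)"
  then have ab: "a < d" "b < d" by auto
  show "chan d R u (1\<^sub>m d) $$ (a,b) = 1\<^sub>m d $$ (a,b)"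
  proof (cases "a = b")
    case False then show ?thesis using ab by (simp add: chan_index)
  next
    case True
    have tP: "sP d (proj d R u) (1\<^sub>m d) = of_nat R" unfolding sP_one using proj_trace[OF o] .
    have tQ: "sP d (compl d (proj d R u)) (1\<^sub>m d) = of_nat d - of_nat R"
      unfolding sP_one using proj_trace[OF o] by (simp add: compl_index sum_subtractf)
    show ?thesis
    proof (cases "a < R")
      case True then show ?thesis using \<open>a = b\<close> ab R tP by (simp add: chan_diag[OF o R(1)])
    next
      case False
      then have "d - R > 0" using ab by simp
      then show ?thesis using False \<open>a = b\<close> ab R tQ by (simp add: chan_diag[OF o R(1)] of_nat_diff field_simps)
    qed
  qed
qed auto

lemma chan_linear: "linear_on d (chan d R u)"
  unfolding linear_on_def
proof (intro conjI ballI allI)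
  fix A B :: "complex mat" and a b :: complex assume A: "A \<in> carrier_mat d d" and B: "B \<in> carrier_mat d d"
  show "chan d R u (a \<cdot>\<^sub>m A + b \<cdot>\<^sub>m B) = a \<cdot>\<^sub>m chan d R u A + b \<cdot>\<^sub>m chan d R u B"
  proof (rule eq_matI)
    fix i j assume "i < dim_row (a \<cdot>\<^sub>m chan d R u A + b \<cdot>\<^sub>m chan d R u B)" "j < dim_col (a \<cdot>\<^sub>m chan d R u A + b \<cdot>\<^sub>m chan d R u B)"
    then have ij: "i < d" "j < d" by auto
    show "chan d R u (a \<cdot>\<^sub>m A + b \<cdot>\<^sub>m B) $$ (i,j) = (a \<cdot>\<^sub>m chan d R u A + b \<cdot>\<^sub>m chan d R u B) $$ (i,j)"
      using ij by (simp add: chan_index bf_lin[OF A B] sum.distrib sum_distrib_left algebra_simps)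
  qed auto
qed simp

lemma chan_cp: "completely_positive d (chan d R u)"
  unfolding completely_positive_def
proof (intro allI impI)
  fix n M assume M: "psd (n * d) M"
  have c: "\<And>a. chc d R a \<ge> 0" unfolding chc_def by simp
  show "psd (n * d) (id_tensor n d (chan d R u) M)"
    using diag_cp[of "chc d R" n d M "chG d R u" d, OF c M] unfolding chan_def .
qed

lemma chan_ucptp:
  assumes o: "orthonormal d R u" and R: "R \<le> d" "1 \<le> R"
  shows "unital_cptp d (chan d R u)"
  unfolding unital_cptp_def trace_preserving_def
  using chan_linear chan_cp chan_tp[OF o R(1) R(2)] chan_unital[OF o R] by blast

lemma chan_state:
  assumes o: "orthonormal d R u" and R: "R \<le> d" "1 \<le> R"
    and rho: "\<rho> \<in> carrier_mat d d" "mtrace \<rho> = 1"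
    and fx: "\<forall>a<d. \<forall>c<d. (\<Sum>b<d. proj d R u $$ (a,b) * \<rho> $$ (b,c)) = \<rho> $$ (a,c)"
  shows "chan d R u \<rho> = (1 / of_nat R) \<cdot>\<^sub>m Pi_proj d R"
proof -
  let ?P = "proj d R u" let ?Q = "compl d ?P"
  have "sP d ?P \<rho> = (\<Sum>j<d. \<Sum>i<d. ?P $$ (j,i) * \<rho> $$ (i,j))"
    unfolding sP_def by (subst sum.swap) (simp add: mult.commute)
  also have "\<dots> = (\<Sum>j<d. \<rho> $$ (j,j))" using fx by simp
  also have "\<dots> = 1" using rho mtrace_carrier[OF rho(1)] by simp
  finally have sp: "sP d ?P \<rho> = 1" .
  have sq: "sP d ?Q \<rho> = 0" using sP_compl[OF rho(1) proj_carrier, of R u] sp rho(2) by simp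
  show ?thesis
  proof (rule eq_matI)
    fix a b assume "a < dim_row ((1 / of_nat R) \<cdot>\<^sub>m Pi_proj d R)" "b < dim_col ((1 / of_nat R) \<cdot>\<^sub>m Pi_proj d R)"
    then have ab: "a < d" "b < d" by auto
    show "chan d R u \<rho> $$ (a,b) = ((1 / of_nat R) \<cdot>\<^sub>m Pi_proj d R) $$ (a,b)"
    proof (cases "a = b")
      case False then show ?thesis using ab by (simp add: chan_index Pi_proj_def)
    next
      case True then show ?thesis using ab sp sq by (simp add: chan_diag[OF o R(1)] Pi_proj_def)
    qed
  qed auto
qed

lemma mult_index:
  assumes "A \<in> carrier_mat d d" "B \<in> carrier_mat d d" "a < d" "c < d"
  shows "(A * B) $$ (a,c) = (\<Sum>b<d. A $$ (a,b) * B $$ (b,c))"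
  using assms by (simp add: scalar_prod_def lessThan_atLeast0)

lemma proj_dims[simp]: "dim_row (proj d R u) = d" "dim_col (proj d R u) = d"
  unfolding proj_def gram_def by simp_all

lemma compl_dims[simp]: "P \<in> carrier_mat d d \<Longrightarrow> dim_row (compl d P) = d"
  "P \<in> carrier_mat d d \<Longrightarrow> dim_col (compl d P) = d"
  unfolding compl_def by simp_all

definition herm :: "nat \<Rightarrow> complex mat \<Rightarrow> bool" where
  "herm d A \<longleftrightarrow> A \<in> carrier_mat d d \<and> (\<forall>a<d. \<forall>b<d. A $$ (b,a) = cnj (A $$ (a,b)))"

lemma psd_herm_mat: "psd d A \<Longrightarrow> herm d A"
  unfolding herm_def
proof (intro conjI allI impI)
  fix a b assume "psd d A" "a < d" "b < d"
  then show "A $$ (b,a) = cnj (A $$ (a,b))" by (rule psd_herm)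
qed (simp add: psd_def)

lemma proj_herm_mat: "herm d (proj d R u)"
  unfolding herm_def
proof (intro conjI allI impI)
  fix a b assume "a < d" "b < d"
  then show "proj d R u $$ (b,a) = cnj (proj d R u $$ (a,b))" by (rule proj_herm)
qed simp

lemma herm_entry: "herm d A \<Longrightarrow> a < d \<Longrightarrow> b < d \<Longrightarrow> A $$ (b,a) = cnj (A $$ (a,b))"
  unfolding herm_def by blast

lemma compl_herm_mat: assumes h: "herm d P" shows "herm d (compl d P)"
proof -
  have P: "P \<in> carrier_mat d d" using h unfolding herm_def by simp
  show ?thesis unfolding herm_def
  proof (intro conjI allI impI)
    fix a b assume ab: "a < d" "b < d"
    show "compl d P $$ (b,a) = cnj (compl d P $$ (a,b))"
      using herm_entry[OF h ab] ab by (simp add: compl_index[OF P])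
  qed (use P in simp)
qed

lemma herm_swap_zero:
  assumes A: "herm d A" and B: "herm d B" and z: "A * B = 0\<^sub>m d d"
  shows "B * A = 0\<^sub>m d d"
proof (rule eq_matI)
  have Ac: "A \<in> carrier_mat d d" and Bc: "B \<in> carrier_mat d d" using A B unfolding herm_def by auto
  fix a c assume "a < dim_row (0\<^sub>m d d :: complex mat)" "c < dim_col (0\<^sub>m d d :: complex mat)"
  then have ac: "a < d" "c < d" by auto
  have "(B * A) $$ (a,c) = (\<Sum>b<d. B $$ (a,b) * A $$ (b,c))" using mult_index[OF Bc Ac ac] .
  also have "\<dots> = (\<Sum>b<d. cnj (A $$ (c,b) * B $$ (b,a)))"
  proof (rule sum.cong[OF refl])
    fix b assume "b \<in> {..<d}"
    then have b: "b < d" by simp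
    show "B $$ (a,b) * A $$ (b,c) = cnj (A $$ (c,b) * B $$ (b,a))"
      using herm_entry[OF A ac(2) b] herm_entry[OF B b ac(1)] by (simp add: mult.commute)
  qed
  also have "\<dots> = cnj ((A * B) $$ (c,a))" using mult_index[OF Ac Bc ac(2) ac(1)] by simp
  finally show "(B * A) $$ (a,c) = 0\<^sub>m d d $$ (a,c)" using z ac by simp
qed (use A B herm_def in auto)

lemma herm_prod_swap:
  assumes A: "herm d A" and B: "herm d B" and C: "herm d C" and z: "A * B = C"
  shows "B * A = C"
proof (rule eq_matI)
  have Ac: "A \<in> carrier_mat d d" and Bc: "B \<in> carrier_mat d d" and Cc: "C \<in> carrier_mat d d"
    using A B C unfolding herm_def by auto
  fix a c assume "a < dim_row C" "c < dim_col C"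
  then have ac: "a < d" "c < d" using Cc by auto
  have "(B * A) $$ (a,c) = (\<Sum>b<d. B $$ (a,b) * A $$ (b,c))" using mult_index[OF Bc Ac ac] .
  also have "\<dots> = (\<Sum>b<d. cnj (A $$ (c,b) * B $$ (b,a)))"
  proof (rule sum.cong[OF refl])
    fix b assume "b \<in> {..<d}"
    then have b: "b < d" by simp
    show "B $$ (a,b) * A $$ (b,c) = cnj (A $$ (c,b) * B $$ (b,a))"
      using herm_entry[OF A ac(2) b] herm_entry[OF B b ac(1)] by (simp add: mult.commute)
  qed
  also have "\<dots> = cnj ((A * B) $$ (c,a))" using mult_index[OF Ac Bc ac(2) ac(1)] by simp
  also have "\<dots> = C $$ (a,c)" using z herm_entry[OF C ac(2) ac(1)] by simp
  finally show "(B * A) $$ (a,c) = C $$ (a,c)" .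
qed (use A B C herm_def in auto)

lemma compl_mult_zero:
  assumes P: "P \<in> carrier_mat d d" and X: "X \<in> carrier_mat d d"
  shows "compl d P * X = 0\<^sub>m d d \<longleftrightarrow> P * X = X"
proof -
  have e: "(compl d P * X) $$ (a,c) = X $$ (a,c) - (P * X) $$ (a,c)" if ac: "a < d" "c < d" for a c
  proof -
    have "(compl d P * X) $$ (a,c) = (\<Sum>b<d. (if a = b then 1 else 0) * X $$ (b,c) - P $$ (a,b) * X $$ (b,c))"
      using mult_index[OF compl_carrier[OF P] X ac] ac by (simp add: compl_index[OF P] algebra_simps)
    also have "\<dots> = X $$ (a,c) - (P * X) $$ (a,c)"
      using mult_index[OF P X ac] ac by (simp add: sum_subtractf delta_sum_l)
    finally show ?thesis .
  qed
  show ?thesis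
  proof
    assume "compl d P * X = 0\<^sub>m d d"
    note z = this
    show "P * X = X"
    proof (rule eq_matI)
      fix i j assume "i < dim_row X" "j < dim_col X"
      then have ij: "i < d" "j < d" using X by auto
      have "X $$ (i,j) - (P * X) $$ (i,j) = 0" using e[OF ij] z ij by simp
      then show "(P * X) $$ (i,j) = X $$ (i,j)" by simp
    qed (use P X in auto)
  next
    assume "P * X = X"
    note z = this
    show "compl d P * X = 0\<^sub>m d d"
    proof (rule eq_matI)
      have QX: "compl d P * X \<in> carrier_mat d d" using compl_carrier[OF P] X by simp
      fix i j assume "i < dim_row (0\<^sub>m d d :: complex mat)" "j < dim_col (0\<^sub>m d d :: complex mat)"
      then have ij: "i < d" "j < d" by auto
      show "(compl d P * X) $$ (i,j) = 0\<^sub>m d d $$ (i,j)" using e[OF ij] z ij by simp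
    qed (use compl_carrier[OF P] X in auto)
  qed
qed


lemma bf_col:
  assumes A: "A \<in> carrier_mat d d" and B: "B \<in> carrier_mat d d" and j: "j < d"
  shows "bf d A (\<lambda>i. B $$ (i,j)) (\<lambda>i. B $$ (i,j)) = (\<Sum>a<d. cnj (B $$ (a,j)) * (A * B) $$ (a,j))"
  unfolding bf_def using mult_index[OF A B _ j]
  by (simp add: sum_distrib_left mult.assoc)

lemma bf_one: "bf d (1\<^sub>m d) g g = (\<Sum>a<d. cnj (g a) * g a)"
proof -
  have "bf d (1\<^sub>m d) g g = (\<Sum>a<d. \<Sum>b<d. cnj (g a) * (if a = b then 1 else 0) * g b)"
    unfolding bf_def by (intro sum.cong refl) simp
  also have "\<dots> = (\<Sum>a<d. cnj (g a) * g a)"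
    by (intro sum.cong refl) (subst delta_mid2, auto)
  finally show ?thesis .
qed

lemma mult_fix_range:
  assumes M: "M \<in> carrier_mat d d" and r: "r \<in> carrier_mat d d" and Mr: "M * r = r"
    and uw: "\<forall>a<d. v a = (\<Sum>b<d. r $$ (a,b) * w b)" and a: "a < d"
  shows "(\<Sum>c<d. M $$ (a,c) * v c) = v a"
proof -
  have "(\<Sum>c<d. M $$ (a,c) * v c) = (\<Sum>c<d. \<Sum>e<d. M $$ (a,c) * r $$ (c,e) * w e)"
    using uw by (simp add: sum_distrib_left mult.assoc)
  also have "\<dots> = (\<Sum>e<d. \<Sum>c<d. M $$ (a,c) * r $$ (c,e) * w e)" by (rule sum.swap)
  also have "\<dots> = (\<Sum>e<d. (M * r) $$ (a,e) * w e)"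
    using mult_index[OF M r a] by (simp add: sum_distrib_right)
  also have "\<dots> = v a" using Mr uw a by simp
  finally show ?thesis .
qed

lemma fix_lemma:
  assumes p0: "psd d \<rho>0" and p: "psd d \<rho>"
    and Rle: "vec_space.rank d (complex_of_real (1/2) \<cdot>\<^sub>m \<rho>0 + complex_of_real (1/2) \<cdot>\<^sub>m \<rho>) \<le> R"
    and o: "orthonormal d R u" and uw: "\<forall>i<R. \<forall>a<d. u i a = (\<Sum>b<d. \<rho>0 $$ (a,b) * w i b)"
  shows "proj d R u * \<rho> = \<rho>"
proof -
  define \<sigma> where "\<sigma> = complex_of_real (1/2) \<cdot>\<^sub>m \<rho>0 + complex_of_real (1/2) \<cdot>\<^sub>m \<rho>"
  have r0C: "\<rho>0 \<in> carrier_mat d d" and rC: "\<rho> \<in> carrier_mat d d" using p0 p unfolding psd_def by auto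
  have ps: "psd d \<sigma>" unfolding \<sigma>_def by (rule psd_lin[OF p0 p]) auto
  have sC: "\<sigma> \<in> carrier_mat d d" using ps unfolding psd_def by simp
  let ?R' = "vec_space.rank d \<sigma>"
  obtain u' w' where uw0: "(\<forall>i<?R'. \<forall>i'<?R'. (\<Sum>a<d. cnj (u' i a) * u' i' a) = (if i = i' then 1 else 0))
     \<and> (\<forall>i<?R'. \<forall>a<d. u' i a = (\<Sum>b<d. \<sigma> $$ (a,b) * w' i b))
     \<and> (\<forall>b<d. \<exists>c. \<forall>a<d. \<sigma> $$ (a,b) = (\<Sum>i<?R'. c i * u' i a))"
    using F1[OF sC] by blast
  have o': "orthonormal d ?R' u'" using uw0 unfolding orthonormal_def by blast
  have span': "\<forall>b<d. \<exists>c. \<forall>a<d. \<sigma> $$ (a,b) = (\<Sum>i<?R'. c i * u' i a)" using uw0 by blast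
  let ?P' = "proj d ?R' u'" let ?Q' = "compl d ?P'"
  let ?P = "proj d R u" let ?Q = "compl d ?P"
  have P'C: "?P' \<in> carrier_mat d d" by simp
  have Q'C: "?Q' \<in> carrier_mat d d" by simp
  have QC: "?Q \<in> carrier_mat d d" by simp
  have Ps: "?P' * \<sigma> = \<sigma>"
  proof (rule eq_matI)
    fix a b assume "a < dim_row \<sigma>" "b < dim_col \<sigma>"
    then have ab: "a < d" "b < d" using sC by auto
    obtain c where c: "\<forall>x<d. \<sigma> $$ (x,b) = (\<Sum>i<?R'. c i * u' i x)" using span' ab by blast
    show "(?P' * \<sigma>) $$ (a,b) = \<sigma> $$ (a,b)"
      unfolding mult_index[OF P'C sC ab] using proj_fix[OF o' ab(1), of "\<lambda>x. \<sigma> $$ (x,b)" c] c by simp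
  qed (use sC in auto)
  have Q's: "?Q' * \<sigma> = 0\<^sub>m d d" using compl_mult_zero[OF P'C sC] Ps by simp
  have sQ': "\<sigma> * ?Q' = 0\<^sub>m d d"
    by (rule herm_swap_zero[OF compl_herm_mat[OF proj_herm_mat] psd_herm_mat[OF ps] Q's])
  have bz: "Re (bf d \<rho>0 (\<lambda>i. ?Q' $$ (i,j)) (\<lambda>i. ?Q' $$ (i,j))) = 0 \<and>
            Re (bf d \<rho> (\<lambda>i. ?Q' $$ (i,j)) (\<lambda>i. ?Q' $$ (i,j))) = 0" if j: "j < d" for j
  proof -
    have "bf d \<sigma> (\<lambda>i. ?Q' $$ (i,j)) (\<lambda>i. ?Q' $$ (i,j)) = 0"
      unfolding bf_col[OF sC Q'C j] sQ' using j by simp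
    moreover have "bf d \<sigma> (\<lambda>i. ?Q' $$ (i,j)) (\<lambda>i. ?Q' $$ (i,j)) =
        complex_of_real (1/2) * bf d \<rho>0 (\<lambda>i. ?Q' $$ (i,j)) (\<lambda>i. ?Q' $$ (i,j)) +
        complex_of_real (1/2) * bf d \<rho> (\<lambda>i. ?Q' $$ (i,j)) (\<lambda>i. ?Q' $$ (i,j))"
      unfolding \<sigma>_def by (rule bf_lin[OF r0C rC])
    ultimately have "0 = Re (complex_of_real (1/2) * bf d \<rho>0 (\<lambda>i. ?Q' $$ (i,j)) (\<lambda>i. ?Q' $$ (i,j)) +
        complex_of_real (1/2) * bf d \<rho> (\<lambda>i. ?Q' $$ (i,j)) (\<lambda>i. ?Q' $$ (i,j)))" by simp
    then have e: "0 = Re (bf d \<rho>0 (\<lambda>i. ?Q' $$ (i,j)) (\<lambda>i. ?Q' $$ (i,j))) / 2 +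
        Re (bf d \<rho> (\<lambda>i. ?Q' $$ (i,j)) (\<lambda>i. ?Q' $$ (i,j))) / 2" by simp
    moreover have "Re (bf d \<rho>0 (\<lambda>i. ?Q' $$ (i,j)) (\<lambda>i. ?Q' $$ (i,j))) \<ge> 0"
      "Re (bf d \<rho> (\<lambda>i. ?Q' $$ (i,j)) (\<lambda>i. ?Q' $$ (i,j))) \<ge> 0" using p0 p unfolding psd_bf by blast+
    ultimately show ?thesis by linarith
  qed
  have rQ: "\<rho>x * ?Q' = 0\<^sub>m d d" if px: "psd d \<rho>x" and z: "\<And>j. j < d \<Longrightarrow> Re (bf d \<rho>x (\<lambda>i. ?Q' $$ (i,j)) (\<lambda>i. ?Q' $$ (i,j))) = 0" for \<rho>x
  proof (rule eq_matI)
    have xC: "\<rho>x \<in> carrier_mat d d" using px unfolding psd_def by simp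
    fix a j assume "a < dim_row (0\<^sub>m d d :: complex mat)" "j < dim_col (0\<^sub>m d d :: complex mat)"
    then have aj: "a < d" "j < d" by auto
    show "(\<rho>x * ?Q') $$ (a,j) = 0\<^sub>m d d $$ (a,j)"
      unfolding mult_index[OF xC Q'C aj] using psd_bf_zero[OF px z[OF aj(2)] aj(1)] aj by simp
  qed (use px psd_def in auto)
  have P'r0: "?P' * \<rho>0 = \<rho>0"
    using herm_swap_zero[OF psd_herm_mat[OF p0] compl_herm_mat[OF proj_herm_mat] rQ[OF p0]] bz
      compl_mult_zero[OF P'C r0C] by blast
  have P'r: "?P' * \<rho> = \<rho>"
    using herm_swap_zero[OF psd_herm_mat[OF p] compl_herm_mat[OF proj_herm_mat] rQ[OF p]] bz
      compl_mult_zero[OF P'C rC] by blast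
  have P'P: "?P' * ?P = ?P"
  proof (rule eq_matI)
    fix a b assume "a < dim_row ?P" "b < dim_col ?P"
    then have ab: "a < d" "b < d" by auto
    have "(?P' * ?P) $$ (a,b) = (\<Sum>c<d. \<Sum>i<R. ?P' $$ (a,c) * u i c * cnj (u i b))"
      unfolding mult_index[OF P'C proj_carrier ab] using ab by (simp add: proj_index sum_distrib_left mult.assoc)
    also have "\<dots> = (\<Sum>i<R. (\<Sum>c<d. ?P' $$ (a,c) * u i c) * cnj (u i b))"
      by (subst sum.swap) (simp add: sum_distrib_right)
    also have "\<dots> = (\<Sum>i<R. u i a * cnj (u i b))"
    proof (rule sum.cong[OF refl])
      fix i assume "i \<in> {..<R}"
      then have "\<forall>x<d. u i x = (\<Sum>b<d. \<rho>0 $$ (x,b) * w i b)" using uw by simp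
      then show "(\<Sum>c<d. ?P' $$ (a,c) * u i c) * cnj (u i b) = u i a * cnj (u i b)"
        using mult_fix_range[OF P'C r0C P'r0 _ ab(1)] by simp
    qed
    finally show "(?P' * ?P) $$ (a,b) = ?P $$ (a,b)" using ab by (simp add: proj_index)
  qed auto
  have PP': "?P * ?P' = ?P"
    by (rule herm_prod_swap[OF proj_herm_mat proj_herm_mat proj_herm_mat P'P])
  define g where "g j = (\<lambda>i. ?P' $$ (i,j))" for j
  have T1: "bf d (1\<^sub>m d) (g j) (g j) = ?P' $$ (j,j)" if j: "j < d" for j
  proof -
    have "bf d (1\<^sub>m d) (g j) (g j) = (\<Sum>a<d. ?P' $$ (j,a) * ?P' $$ (a,j))"
      unfolding bf_one g_def
    proof (rule sum.cong[OF refl])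
      fix a assume "a \<in> {..<d}"
      then have a: "a < d" by simp
      show "cnj (?P' $$ (a,j)) * ?P' $$ (a,j) = ?P' $$ (j,a) * ?P' $$ (a,j)"
        using proj_herm[OF a j, of ?R' u'] by simp
    qed
    also have "\<dots> = ?P' $$ (j,j)" using proj_idem[OF o' j j] .
    finally show ?thesis .
  qed
  have T2: "bf d ?P (g j) (g j) = ?P $$ (j,j)" if j: "j < d" for j
  proof -
    have "bf d ?P (g j) (g j) = (\<Sum>a<d. cnj (?P' $$ (a,j)) * (?P * ?P') $$ (a,j))"
      unfolding g_def by (rule bf_col[OF proj_carrier proj_carrier j])
    also have "\<dots> = (\<Sum>a<d. ?P' $$ (j,a) * ?P $$ (a,j))"
      unfolding PP'
    proof (rule sum.cong[OF refl])
      fix a assume "a \<in> {..<d}"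
      then have a: "a < d" by simp
      show "cnj (?P' $$ (a,j)) * ?P $$ (a,j) = ?P' $$ (j,a) * ?P $$ (a,j)"
        using proj_herm[OF a j, of ?R' u'] by simp
    qed
    also have "\<dots> = (?P' * ?P) $$ (j,j)" using mult_index[OF P'C proj_carrier j j] by simp
    finally show ?thesis unfolding P'P .
  qed
  have TQ: "bf d ?Q (g j) (g j) = ?P' $$ (j,j) - ?P $$ (j,j)" if j: "j < d" for j
    unfolding compl_def bf_lin[OF one_carrier_mat proj_carrier] using T1[OF j] T2[OF j] by simp
  have "(\<Sum>j<d. bf d ?Q (g j) (g j)) = of_nat ?R' - of_nat R"
    using TQ proj_trace[OF o'] proj_trace[OF o] by (simp add: sum_subtractf)
  then have "(\<Sum>j<d. Re (bf d ?Q (g j) (g j))) = real ?R' - real R"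
    by (metis Re_complex_of_real Re_sum minus_complex.sel(1) of_real_of_nat_eq)
  also have "\<dots> \<le> 0" using Rle unfolding \<sigma>_def by simp
  finally have sle: "(\<Sum>j<d. Re (bf d ?Q (g j) (g j))) \<le> 0" .
  have nn: "Re (bf d ?Q (g j) (g j)) \<ge> 0" for j using compl_proj_psd[OF o] unfolding psd_bf by blast
  have z: "Re (bf d ?Q (g j) (g j)) = 0" if j: "j < d" for j
  proof -
    have "(\<Sum>j<d. Re (bf d ?Q (g j) (g j))) = 0" using sle nn by (meson antisym sum_nonneg)
    then show ?thesis using nn j by (subst (asm) sum_nonneg_eq_0_iff) auto
  qed
  have QP': "?Q * ?P' = 0\<^sub>m d d"
  proof (rule eq_matI)
    fix a j assume "a < dim_row (0\<^sub>m d d :: complex mat)" "j < dim_col (0\<^sub>m d d :: complex mat)"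
    then have aj: "a < d" "j < d" by auto
    show "(?Q * ?P') $$ (a,j) = 0\<^sub>m d d $$ (a,j)"
      unfolding mult_index[OF QC P'C aj] using psd_bf_zero[OF compl_proj_psd[OF o] z[OF aj(2)] aj(1)] aj
      by (simp add: g_def)
  qed auto
  have "?Q * \<rho> = ?Q * (?P' * \<rho>)" using P'r by simp
  also have "\<dots> = (?Q * ?P') * \<rho>" using assoc_mult_mat[OF QC P'C rC] by simp
  also have "\<dots> = 0\<^sub>m d d" using QP' rC by simp
  finally show ?thesis using compl_mult_zero[OF proj_carrier rC] by simp
qed

definition cmb :: "nat \<Rightarrow> nat \<Rightarrow> (nat \<Rightarrow> real) \<Rightarrow> (nat \<Rightarrow> complex mat) \<Rightarrow> complex mat" where
  "cmb d m p r = mat d d (\<lambda>(i, j). \<Sum>l<m. complex_of_real (p l) * (r l) $$ (i, j))"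

lemma hull_rep:
  "\<sigma> \<in> conv_hull_mat d V \<longleftrightarrow> (\<exists>m p r. m > 0 \<and> (\<forall>l<m. p l \<ge> 0 \<and> r l \<in> V) \<and> (\<Sum>l<m. p l) = 1 \<and> \<sigma> = cmb d m p r)"
  unfolding conv_hull_mat_def cmb_def by blast

lemma cmb_carrier[simp]: "cmb d m p r \<in> carrier_mat d d" unfolding cmb_def by simp

lemma bf_cmb: "bf d (cmb d m p r) f f = (\<Sum>l<m. complex_of_real (p l) * bf d (r l) f f)"
proof -
  have "bf d (cmb d m p r) f f = (\<Sum>i<d. \<Sum>j<d. \<Sum>l<m. complex_of_real (p l) * (cnj (f i) * r l $$ (i,j) * f j))"
    unfolding bf_def cmb_def by (intro sum.cong refl) (simp add: sum_distrib_left sum_distrib_right algebra_simps)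
  also have "\<dots> = (\<Sum>i<d. \<Sum>l<m. \<Sum>j<d. complex_of_real (p l) * (cnj (f i) * r l $$ (i,j) * f j))"
    by (rule sum.cong[OF refl]) (rule sum.swap)
  also have "\<dots> = (\<Sum>l<m. \<Sum>i<d. \<Sum>j<d. complex_of_real (p l) * (cnj (f i) * r l $$ (i,j) * f j))"
    by (rule sum.swap)
  also have "\<dots> = (\<Sum>l<m. complex_of_real (p l) * bf d (r l) f f)"
    unfolding bf_def by (simp add: sum_distrib_left)
  finally show ?thesis .
qed

lemma hull_dens:
  assumes V: "V \<subseteq> density_ops d" and s: "\<sigma> \<in> conv_hull_mat d V"
  shows "psd d \<sigma> \<and> mtrace \<sigma> = 1"
proof -
  obtain m p r where mpr: "m > 0" "\<forall>l<m. p l \<ge> 0 \<and> r l \<in> V" "(\<Sum>l<m. p l) = 1" "\<sigma> = cmb d m p r"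
    using s unfolding hull_rep by blast
  have rl: "psd d (r l)" "mtrace (r l) = 1" if "l < m" for l using mpr(2) V that unfolding density_ops_def by auto
  have "psd d (cmb d m p r)" unfolding psd_bf
  proof (intro conjI allI)
    fix f
    have re: "Im (bf d (r l) f f) = 0" "Re (bf d (r l) f f) \<ge> 0" if "l < m" for l using rl[OF that] unfolding psd_bf by auto
    show "Im (bf d (cmb d m p r) f f) = 0" unfolding bf_cmb Im_sum using re by (intro sum.neutral) auto
    show "Re (bf d (cmb d m p r) f f) \<ge> 0" unfolding bf_cmb Re_sum using re mpr(2) by (intro sum_nonneg) auto
  qed simp
  moreover have "mtrace (cmb d m p r) = 1"
  proof -
    have "mtrace (cmb d m p r) = (\<Sum>i<d. \<Sum>l<m. complex_of_real (p l) * r l $$ (i,i))"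
      unfolding mtrace_carrier[OF cmb_carrier] by (intro sum.cong refl) (simp add: cmb_def)
    also have "\<dots> = (\<Sum>l<m. complex_of_real (p l) * (\<Sum>i<d. r l $$ (i,i)))"
      by (subst sum.swap) (simp add: sum_distrib_left)
    also have "\<dots> = (\<Sum>l<m. complex_of_real (p l))"
    proof (rule sum.cong[OF refl])
      fix l assume "l \<in> {..<m}"
      then have "mtrace (r l) = 1" "r l \<in> carrier_mat d d" using rl unfolding psd_def by auto
      then show "complex_of_real (p l) * (\<Sum>i<d. r l $$ (i,i)) = complex_of_real (p l)"
        using mtrace_carrier by simp
    qed
    also have "\<dots> = 1" using mpr(3) by (metis of_real_1 of_real_sum)
    finally show ?thesis .
  qed
  ultimately show ?thesis using mpr(4) by simp
qed

lemma ucptp_zero: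
  assumes E: "unital_cptp d E"
  shows "E (0\<^sub>m d d) = 0\<^sub>m d d"
proof -
  have z: "0 \<cdot>\<^sub>m 0\<^sub>m d d + 0 \<cdot>\<^sub>m 0\<^sub>m d d = (0\<^sub>m d d :: complex mat)" by (intro eq_matI) auto
  have EC: "E (0\<^sub>m d d) \<in> carrier_mat d d" using ucptp_carrier[OF E] by simp
  have "E (0\<^sub>m d d) = 0 \<cdot>\<^sub>m E (0\<^sub>m d d) + 0 \<cdot>\<^sub>m E (0\<^sub>m d d)"
    using ucptp_lin[OF E zero_carrier_mat zero_carrier_mat, of 0 0] z by simp
  also have "\<dots> = 0\<^sub>m d d" using EC by (intro eq_matI) auto
  finally show ?thesis .
qed

lemma hull_E:
  assumes E: "unital_cptp d E" and C: "C \<in> carrier_mat d d" and EV: "\<forall>\<rho>\<in>V. E \<rho> = C"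
    and V: "V \<subseteq> density_ops d" and s: "\<sigma> \<in> conv_hull_mat d V"
  shows "E \<sigma> = C"
proof -
  obtain m p r where mpr: "m > 0" "\<forall>l<m. p l \<ge> 0 \<and> r l \<in> V" "(\<Sum>l<m. p l) = 1" "\<sigma> = cmb d m p r"
    using s unfolding hull_rep by blast
  have rC: "r l \<in> carrier_mat d d" if "l < m" for l using mpr(2) V that unfolding density_ops_def psd_def by auto
  have "n \<le> m \<Longrightarrow> E (cmb d n p r) = (\<Sum>l<n. complex_of_real (p l)) \<cdot>\<^sub>m C" for n
  proof (induction n)
    case 0
    have "cmb d 0 p r = 0\<^sub>m d d" unfolding cmb_def by (intro eq_matI) auto
    moreover have "(\<Sum>l<0. complex_of_real (p l)) \<cdot>\<^sub>m C = 0\<^sub>m d d" using C by (intro eq_matI) auto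
    ultimately show ?case using ucptp_zero[OF E] by simp
  next
    case (Suc n)
    then have n: "n < m" by simp
    have "cmb d (Suc n) p r = 1 \<cdot>\<^sub>m cmb d n p r + complex_of_real (p n) \<cdot>\<^sub>m r n"
      using rC[OF n] by (intro eq_matI) (auto simp: cmb_def)
    then have "E (cmb d (Suc n) p r) = 1 \<cdot>\<^sub>m E (cmb d n p r) + complex_of_real (p n) \<cdot>\<^sub>m E (r n)"
      using ucptp_lin[OF E cmb_carrier rC[OF n]] by simp
    also have "\<dots> = 1 \<cdot>\<^sub>m ((\<Sum>l<n. complex_of_real (p l)) \<cdot>\<^sub>m C) + complex_of_real (p n) \<cdot>\<^sub>m C"
      using Suc n EV mpr(2) by simp
    also have "\<dots> = (\<Sum>l<Suc n. complex_of_real (p l)) \<cdot>\<^sub>m C"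
      using C by (intro eq_matI) (auto simp: algebra_simps)
    finally show ?case .
  qed
  from this[of m] have "E \<sigma> = (\<Sum>l<m. complex_of_real (p l)) \<cdot>\<^sub>m C" using mpr(4) by simp
  also have "(\<Sum>l<m. complex_of_real (p l)) = 1" using mpr(3) by (metis of_real_1 of_real_sum)
  also have "(1::complex) \<cdot>\<^sub>m C = C" using C by (intro eq_matI) auto
  finally show ?thesis .
qed

lemma hull_mid:
  assumes s: "\<sigma> \<in> conv_hull_mat d V" and r: "\<rho> \<in> V" and V: "V \<subseteq> density_ops d"
  shows "complex_of_real (1/2) \<cdot>\<^sub>m \<sigma> + complex_of_real (1/2) \<cdot>\<^sub>m \<rho> \<in> conv_hull_mat d V"
proof -
  obtain m p r where mpr: "m > 0" "\<forall>l<m. p l \<ge> 0 \<and> r l \<in> V" "(\<Sum>l<m. p l) = 1" "\<sigma> = cmb d m p r"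
    using s unfolding hull_rep by blast
  have rhoC: "\<rho> \<in> carrier_mat d d" using r V unfolding density_ops_def psd_def by auto
  define p' where "p' l = (if l < m then p l / 2 else 1/2)" for l
  define r' where "r' l = (if l < m then r l else \<rho>)" for l
  have "complex_of_real (1/2) \<cdot>\<^sub>m \<sigma> + complex_of_real (1/2) \<cdot>\<^sub>m \<rho> = cmb d (Suc m) p' r'"
  proof (rule eq_matI)
    fix i j assume "i < dim_row (cmb d (Suc m) p' r')" "j < dim_col (cmb d (Suc m) p' r')"
    then have ij: "i < d" "j < d" unfolding cmb_def by auto
    have "(\<Sum>l<m. complex_of_real (p' l) * r' l $$ (i,j)) = (\<Sum>l<m. complex_of_real (1/2) * (complex_of_real (p l) * r l $$ (i,j)))"
      by (intro sum.cong refl) (simp add: p'_def r'_def)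
    then show "(complex_of_real (1/2) \<cdot>\<^sub>m \<sigma> + complex_of_real (1/2) \<cdot>\<^sub>m \<rho>) $$ (i,j) = cmb d (Suc m) p' r' $$ (i,j)"
      using ij rhoC mpr(4) by (simp add: cmb_def p'_def r'_def sum_distrib_left)
  qed (use rhoC mpr(4) in \<open>auto simp: cmb_def\<close>)
  moreover have "(\<Sum>l<Suc m. p' l) = 1"
  proof -
    have "(\<Sum>l<m. p' l) = (\<Sum>l<m. p l / 2)" by (intro sum.cong refl) (simp add: p'_def)
    then show ?thesis using mpr(3) by (simp add: p'_def sum_divide_distrib[symmetric])
  qed
  moreover have "\<forall>l<Suc m. p' l \<ge> 0 \<and> r' l \<in> V" using mpr(2) r by (auto simp: p'_def r'_def)
  ultimately show ?thesis unfolding hull_rep by blast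
qed

lemma V_hull:
  assumes r: "\<rho> \<in> V" and V: "V \<subseteq> density_ops d"
  shows "\<rho> \<in> conv_hull_mat d V"
proof -
  have rhoC: "\<rho> \<in> carrier_mat d d" using r V unfolding density_ops_def psd_def by auto
  have "\<rho> = cmb d 1 (\<lambda>l. 1) (\<lambda>l. \<rho>)" using rhoC by (intro eq_matI) (auto simp: cmb_def)
  then show ?thesis unfolding hull_rep using r by (intro exI[of _ 1] exI[of _ "\<lambda>l. 1"] exI[of _ "\<lambda>l. \<rho>"]) auto
qed

lemma id_ucptp: "unital_cptp d (\<lambda>X. X)"
  unfolding unital_cptp_def linear_on_def completely_positive_def trace_preserving_def
proof (intro conjI allI impI ballI)
  fix n M assume M: "psd (n * d) M"
  have MC: "M \<in> carrier_mat (n*d) (n*d)" using M unfolding psd_def by simp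
  have "id_tensor n d (\<lambda>X. X) M = M"
  proof (rule eq_matI)
    fix i j assume "i < dim_row M" "j < dim_col M"
    then have ij: "i < n * d" "j < n * d" using MC by auto
    then have d0: "d > 0" by (cases d) auto
    have "i mod d < d" "j mod d < d" using d0 by auto
    then show "id_tensor n d (\<lambda>X. X) M $$ (i,j) = M $$ (i,j)"
      using ij by (simp add: id_tensor_def)
  qed (use MC in \<open>auto simp: id_tensor_def\<close>)
  then show "psd (n * d) (id_tensor n d (\<lambda>X. X) M)" using M by simp
qed auto

lemma rank_pos:
  assumes A: "A \<in> carrier_mat d d" and t: "mtrace A = 1"
  shows "vec_space.rank d A \<ge> 1"
proof (rule ccontr)
  assume "\<not> vec_space.rank d A \<ge> 1"
  then have r0: "vec_space.rank d A = 0" by simp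
  obtain u w where uw: "(\<forall>i<vec_space.rank d A. \<forall>i'<vec_space.rank d A. (\<Sum>a<d. cnj (u i a) * u i' a) = (if i = i' then 1 else 0))
     \<and> (\<forall>i<vec_space.rank d A. \<forall>a<d. u i a = (\<Sum>b<d. A $$ (a,b) * w i b))
     \<and> (\<forall>b<d. \<exists>c. \<forall>a<d. A $$ (a,b) = (\<Sum>i<vec_space.rank d A. c i * u i a))"
    using F1[OF A] by blast
  then have "\<forall>b<d. \<forall>a<d. A $$ (a,b) = 0" unfolding r0 by simp
  then have "mtrace A = 0" unfolding mtrace_carrier[OF A] by simp
  then show False using t by simp
qed

theorem mainTheorem13:
  fixes d :: nat and V :: "complex mat set"
  assumes "d \<ge> 1"
    and "V \<in> specs d"
  shows "yield d V = log 2 (real d) - Max (H0 d ` conv_hull_mat d V)"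
proof -
  have Vne: "V \<noteq> {}" and V: "V \<subseteq> density_ops d" using assms(2) unfolding specs_def by auto
  let ?H = "conv_hull_mat d V"
  let ?rk = "\<lambda>\<sigma>. vec_space.rank d \<sigma>"
  have Hd: "psd d \<sigma> \<and> mtrace \<sigma> = 1" if "\<sigma> \<in> ?H" for \<sigma> using hull_dens[OF V that] .
  have HC: "\<sigma> \<in> carrier_mat d d" if "\<sigma> \<in> ?H" for \<sigma> using Hd[OF that] unfolding psd_def by simp
  obtain \<rho>1 where "\<rho>1 \<in> V" using Vne by blast
  then have "\<rho>1 \<in> ?H" using V_hull[OF _ V] by simp
  then have Hne: "?H \<noteq> {}" by blast
  have Ksub: "?rk ` ?H \<subseteq> {..d}"
  proof
    fix k assume "k \<in> ?rk ` ?H"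
    then obtain \<sigma> where "\<sigma> \<in> ?H" "k = ?rk \<sigma>" by blast
    then show "k \<in> {..d}" using vec_space.rank_le_nc[OF HC[of \<sigma>]] by simp
  qed
  have Kfin: "finite (?rk ` ?H)" using Ksub finite_subset by blast
  have Kne: "?rk ` ?H \<noteq> {}" using Hne by blast
  define R where "R = Max (?rk ` ?H)"
  have "R \<in> ?rk ` ?H" unfolding R_def using Kfin Kne by (rule Max_in)
  then obtain \<rho>0 where r0H: "\<rho>0 \<in> ?H" and R0: "?rk \<rho>0 = R" by blast
  have Rmax: "?rk \<sigma> \<le> R" if "\<sigma> \<in> ?H" for \<sigma> unfolding R_def
    by (rule Max_ge[OF Kfin]) (use that in blast)
  have r0C: "\<rho>0 \<in> carrier_mat d d" using HC[OF r0H] .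
  have p0: "psd d \<rho>0" using Hd[OF r0H] by simp
  have R1: "R \<ge> 1" using rank_pos[OF r0C] Hd[OF r0H] R0 by simp
  have "R \<in> {..d}" using Ksub \<open>R \<in> ?rk ` ?H\<close> by (rule subsetD)
  then have Rd: "R \<le> d" by simp
  obtain u w where uw0: "(\<forall>i<?rk \<rho>0. \<forall>i'<?rk \<rho>0. (\<Sum>a<d. cnj (u i a) * u i' a) = (if i = i' then 1 else 0))
     \<and> (\<forall>i<?rk \<rho>0. \<forall>a<d. u i a = (\<Sum>b<d. \<rho>0 $$ (a,b) * w i b))
     \<and> (\<forall>b<d. \<exists>c. \<forall>a<d. \<rho>0 $$ (a,b) = (\<Sum>i<?rk \<rho>0. c i * u i a))"
    using F1[OF r0C] by blast
  have o: "orthonormal d R u" using uw0[unfolded R0] unfolding orthonormal_def by (rule conjunct1)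
  have uw: "\<forall>i<R. \<forall>a<d. u i a = (\<Sum>b<d. \<rho>0 $$ (a,b) * w i b)" using uw0[unfolded R0] by (rule conjunct2[THEN conjunct1])
  have fixV: "proj d R u * \<rho> = \<rho>" if r: "\<rho> \<in> V" for \<rho>
  proof (rule fix_lemma[OF p0 _ _ o uw])
    show "psd d \<rho>" using r V unfolding density_ops_def by auto
    show "?rk (complex_of_real (1/2) \<cdot>\<^sub>m \<rho>0 + complex_of_real (1/2) \<cdot>\<^sub>m \<rho>) \<le> R"
      using Rmax hull_mid[OF r0H r V] by blast
  qed
  have chV: "chan d R u \<rho> = (1 / of_nat R) \<cdot>\<^sub>m Pi_proj d R" if r: "\<rho> \<in> V" for \<rho>
  proof -
    have rd: "psd d \<rho>" "mtrace \<rho> = 1" using r V unfolding density_ops_def by auto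
    then have rC: "\<rho> \<in> carrier_mat d d" unfolding psd_def by simp
    show ?thesis
    proof (rule chan_state[OF o Rd R1 rC rd(2)])
      show "\<forall>a<d. \<forall>c<d. (\<Sum>b<d. proj d R u $$ (a,b) * \<rho> $$ (b,c)) = \<rho> $$ (a,c)"
        using fixV[OF r] mult_index[OF proj_carrier rC] by metis
    qed
  qed
  let ?S = "{currency_val d c | c. c \<in> currency_index d \<and> convertible d V (currency_set d c)}"
  have inS: "log 2 (real d) - log 2 (real R) \<in> ?S"
  proof -
    have "Some R \<in> currency_index d" unfolding currency_index_def using R1 Rd by auto
    moreover have "convertible d V (currency_set d (Some R))"
      unfolding convertible_def currency_set_def using chan_ucptp[OF o Rd R1] chV by auto
    moreover have "currency_val d (Some R) = log 2 (real d) - log 2 (real R)" unfolding currency_val_def by simp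
    ultimately show ?thesis by (intro CollectI exI[of _ "Some R"]) simp
  qed
  have ub: "x \<le> log 2 (real d) - log 2 (real R)" if x: "x \<in> ?S" for x
  proof -
    obtain c where c: "x = currency_val d c" "c \<in> currency_index d" "convertible d V (currency_set d c)"
      using x by blast
    show ?thesis
    proof (cases c)
      case None
      then show ?thesis using c R1 Rd by (simp add: currency_val_def)
    next
      case (Some k)
      then have k: "1 \<le> k" "k \<le> d" using c(2) unfolding currency_index_def by auto
      obtain E where E: "unital_cptp d E" "\<forall>\<rho>\<in>V. E \<rho> \<in> currency_set d c" using c(3) unfolding convertible_def by blast
      have EV: "\<forall>\<rho>\<in>V. E \<rho> = (1 / of_nat k) \<cdot>\<^sub>m Pi_proj d k" using E(2) Some unfolding currency_set_def by auto
      have "E \<rho>0 = (1 / of_nat k) \<cdot>\<^sub>m Pi_proj d k"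
        by (rule hull_E[OF E(1) _ EV V r0H]) simp
      then have "R \<le> k" using rank_upper[OF E(1) p0 k(2)] R0 by simp
      then have "log 2 (real R) \<le> log 2 (real k)" using R1 by simp
      then show ?thesis using c(1) Some by (simp add: currency_val_def)
    qed
  qed
  have Y: "yield d V = log 2 (real d) - log 2 (real R)"
    unfolding yield_def by (rule cSup_eq_maximum[OF inS ub]) auto
  have "H0 d ` ?H = (\<lambda>k. log 2 (real k)) ` (?rk ` ?H)" unfolding H0_def image_image ..
  then have M: "Max (H0 d ` ?H) = log 2 (real R)"
  proof -
    assume e: "H0 d ` ?H = (\<lambda>k. log 2 (real k)) ` (?rk ` ?H)"
    show ?thesis
    proof (rule Max_eqI)
      show "finite (H0 d ` ?H)" unfolding e using Kfin by simp
      show "log 2 (real R) \<in> H0 d ` ?H" unfolding e using \<open>R \<in> ?rk ` ?H\<close> by blast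
      fix y assume "y \<in> H0 d ` ?H"
      then obtain \<sigma> where s: "\<sigma> \<in> ?H" "y = log 2 (real (?rk \<sigma>))" unfolding H0_def by blast
      have "?rk \<sigma> \<ge> 1" using rank_pos[OF HC[OF s(1)]] Hd[OF s(1)] by simp
      then show "y \<le> log 2 (real R)" using s Rmax[OF s(1)] by simp
    qed
  qed
  show ?thesis using Y M by simp
qed

end
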